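(* Let $P=(V,V_\Diamond,E,\omega)$ be a partial parity game with interface $U$, let $v\in V$, and let $\pi$ be a partial winning strategy for $(P,v)$. Then there exists a positional partial winning strategy $\rho$ for $(P,v)$ such that $\mathrm{profile}(\rho,v)\sqsubseteq\mathrm{profile}(\pi,v)$.
   Context: **Parity games.** A parity game $(V,V_\Diamond,E,\omega)$ is a digraph $(V,E)$ with $V_\Diamond\subseteq V$ and priorities $\omega:V\to\mathbb N$. Player $\Diamond$ moves at nodes of $V_\Diamond$ and Player $\Box$ at the other nodes. A player who cannot move loses. An infinite play is won by $\Diamond$ iff the minimum priority occurring infinitely often is even. **Strategies.** For a partial function $\pi:V^+\to V$, a path $(v_1,\dots,v_n)$ is $\pi$-conforming if for all $i<n$ with $v_i\in V_\Diamond$ we have $(v_1,\dots,v_i)\in\mathrm{dom}(\pi)$ and $v_{i+1}=\pi(v_1,\dots,v_i)$, with $(v_i,v_{i+1})\in E$. An infinite path is $\pi$-conforming if all its finite prefixes are. **Partial parity games and partial strategies.** A partial parity game additionally has an interface $U\subseteq V$. A partial strategy for $(P,v_1)$ is a partial $\pi:V^+\to V$ such that: - for every $(v_1,\dots,v_n)\in\mathrm{dom}(\pi)$, the path $(v_1,\dots,v_n,\pi(v_1,\dots,v_n))$ is $\pi$-conforming and $v_n\in V_\Diamond$; - for every $\pi$-conforming path $(v_1,\dots,v_n)$ with $v_n\in V_\Diamond\setminus U$, we have $(v_1,\dots,v_n)\in\mathrm{dom}(\pi)$. $\pi$ is positional if $\pi(v_1,\dots,v_n)$ depends only on $v_n$.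 **Partial winning strategies.** $\pi$ is a partial winning strategy for $(P,v_1)$ if the following holds. Add to $P$ a new $\Box$-node $\top$ without successors and edges from every node of $V_\Diamond\cap U$ to $\top$, and extend $\pi$ by moving to $\top$ on $\pi$-conforming paths ending in $V_\Diamond\cap U$ where $\pi$ is undefined. Then every maximal conforming path from $v_1$ in the resulting game is won by $\Diamond$. **Reward ordering on priorities.** $p\sqsubseteq p'$ iff one of: - $p$ is even and $p'$ is odd; - both are even and $p\le p'$; - both are odd and $p\ge p'$. **Profiles.** For a partial winning strategy $\pi$ for $(P,v_1)$: - $\mathrm{preprofile}(\pi,v_1)=\{(v_n,\min_{1\le i\le n}\omega(v_i)) : n>1,\ (v_1,\dots,v_n)$ is a $\pi$-conforming path with $v_n\in U$ and $(v_1,\dots,v_n)\notin\mathrm{dom}(\pi)\}$; - $\mathrm{profile}(\pi,v_1)$ consists of the pairs $(u,p)\in\mathrm{preprofile}(\pi,v_1)$ with $p$ $\sqsubseteq$-maximal among pairs with first component $u$. For profiles $y,y'$, $y\sqsubseteq y'$ iff for every $(u,p)\in y$ there is $(u,p')\in y'$ with $p\sqsubseteq p'$. *)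

theory Defs
  imports Main
begin

(* A parity game is given by (V, Vd, E, omega): V the nodes, Vd the nodes of player Diamond,
   E the edge relation, omega the priority function. *)

definition conforming ::
  "'v set \<Rightarrow> 'v set \<Rightarrow> ('v \<times> 'v) set \<Rightarrow> ('v list \<Rightarrow> 'v option) \<Rightarrow> 'v list \<Rightarrow> bool" where
  "conforming V Vd E \<pi> p \<longleftrightarrow>
     p \<noteq> [] \<and> set p \<subseteq> V \<and>
     (\<forall>i. Suc i < length p \<longrightarrow>
        (p ! i, p ! Suc i) \<in> E \<and>
        (p ! i \<in> Vd \<longrightarrow> \<pi> (take (Suc i) p) = Some (p ! Suc i)))"

definition inf_conforming ::
  "'v set \<Rightarrow> 'v set \<Rightarrow> ('v \<times> 'v) set \<Rightarrow> ('v list \<Rightarrow> 'v option) \<Rightarrow> (nat \<Rightarrow> 'v) \<Rightarrow> bool" where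
  "inf_conforming V Vd E \<pi> f \<longleftrightarrow> (\<forall>n>0. conforming V Vd E \<pi> (map f [0..<n]))"

definition inf_won :: "('v \<Rightarrow> nat) \<Rightarrow> (nat \<Rightarrow> 'v) \<Rightarrow> bool" where
  "inf_won \<omega> f \<longleftrightarrow> even (LEAST q. \<exists>\<^sub>\<infinity>n. \<omega> (f n) = q)"

(* every maximal conforming play from v1 is won by Diamond.  A finite maximal play is
   lost by the owner of its last node (who cannot move): Diamond wins iff it ends in a
   Box node. *)
definition winning_from ::
  "'v set \<Rightarrow> 'v set \<Rightarrow> ('v \<times> 'v) set \<Rightarrow> ('v \<Rightarrow> nat) \<Rightarrow> ('v list \<Rightarrow> 'v option) \<Rightarrow> 'v \<Rightarrow> bool" where
  "winning_from V Vd E \<omega> \<pi> v1 \<longleftrightarrow>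
     (\<forall>p. conforming V Vd E \<pi> p \<and> hd p = v1 \<and>
          \<not> (\<exists>w. conforming V Vd E \<pi> (p @ [w])) \<longrightarrow> last p \<notin> Vd) \<and>
     (\<forall>f. inf_conforming V Vd E \<pi> f \<and> f 0 = v1 \<longrightarrow> inf_won \<omega> f)"

definition partial_strategy ::
  "'v set \<Rightarrow> 'v set \<Rightarrow> ('v \<times> 'v) set \<Rightarrow> 'v set \<Rightarrow> ('v list \<Rightarrow> 'v option) \<Rightarrow> 'v \<Rightarrow> bool" where
  "partial_strategy V Vd E U \<pi> v1 \<longleftrightarrow>
     (\<forall>p \<in> dom \<pi>. p \<noteq> [] \<and> hd p = v1 \<and>
        conforming V Vd E \<pi> (p @ [the (\<pi> p)]) \<and> last p \<in> Vd) \<and>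
     (\<forall>p. conforming V Vd E \<pi> p \<and> hd p = v1 \<and> last p \<in> Vd - U \<longrightarrow> p \<in> dom \<pi>)"

definition positional :: "('v list \<Rightarrow> 'v option) \<Rightarrow> bool" where
  "positional \<pi> \<longleftrightarrow> (\<forall>p \<in> dom \<pi>. \<forall>q \<in> dom \<pi>. last p = last q \<longrightarrow> \<pi> p = \<pi> q)"

(* The extended game: None plays the role of the new Box node top (no successors). *)
definition ext_V :: "'v set \<Rightarrow> 'v option set" where
  "ext_V V = Some ` V \<union> {None}"

definition ext_Vd :: "'v set \<Rightarrow> 'v option set" where
  "ext_Vd Vd = Some ` Vd"

definition ext_E :: "('v \<times> 'v) set \<Rightarrow> 'v set \<Rightarrow> 'v set \<Rightarrow> ('v option \<times> 'v option) set" where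
  "ext_E E Vd U = {(Some a, Some b) | a b. (a, b) \<in> E} \<union> {(Some u, None) | u. u \<in> Vd \<inter> U}"

(* priority of top is irrelevant (top has no successors); we choose 0 *)
definition ext_\<omega> :: "('v \<Rightarrow> nat) \<Rightarrow> 'v option \<Rightarrow> nat" where
  "ext_\<omega> \<omega> x = (case x of Some v \<Rightarrow> \<omega> v | None \<Rightarrow> 0)"

definition ext_strat ::
  "'v set \<Rightarrow> 'v set \<Rightarrow> ('v \<times> 'v) set \<Rightarrow> 'v set \<Rightarrow> ('v list \<Rightarrow> 'v option)
     \<Rightarrow> 'v option list \<Rightarrow> 'v option option" where
  "ext_strat V Vd E U \<pi> ps =
     (if None \<in> set ps then None
      else (let p = map the ps in
            case \<pi> p of
              Some w \<Rightarrow> Some (Some w)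
            | None \<Rightarrow> (if conforming V Vd E \<pi> p \<and> last p \<in> Vd \<inter> U then Some None else None)))"

definition partial_winning ::
  "'v set \<Rightarrow> 'v set \<Rightarrow> ('v \<times> 'v) set \<Rightarrow> ('v \<Rightarrow> nat) \<Rightarrow> 'v set \<Rightarrow> ('v list \<Rightarrow> 'v option) \<Rightarrow> 'v \<Rightarrow> bool" where
  "partial_winning V Vd E \<omega> U \<pi> v1 \<longleftrightarrow>
     partial_strategy V Vd E U \<pi> v1 \<and>
     winning_from (ext_V V) (ext_Vd Vd) (ext_E E Vd U) (ext_\<omega> \<omega>) (ext_strat V Vd E U \<pi>) (Some v1)"

definition rew_le :: "nat \<Rightarrow> nat \<Rightarrow> bool" where
  "rew_le p p' \<longleftrightarrow> (even p \<and> odd p') \<or> (even p \<and> even p' \<and> p \<le> p') \<or> (odd p \<and> odd p' \<and> p \<ge> p')"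

definition preprofile ::
  "'v set \<Rightarrow> 'v set \<Rightarrow> ('v \<times> 'v) set \<Rightarrow> ('v \<Rightarrow> nat) \<Rightarrow> 'v set \<Rightarrow> ('v list \<Rightarrow> 'v option) \<Rightarrow> 'v \<Rightarrow> ('v \<times> nat) set" where
  "preprofile V Vd E \<omega> U \<pi> v1 =
     {(last p, Min (\<omega> ` set p)) | p. length p > 1 \<and> conforming V Vd E \<pi> p \<and> hd p = v1 \<and>
                                     last p \<in> U \<and> p \<notin> dom \<pi>}"

definition profile ::
  "'v set \<Rightarrow> 'v set \<Rightarrow> ('v \<times> 'v) set \<Rightarrow> ('v \<Rightarrow> nat) \<Rightarrow> 'v set \<Rightarrow> ('v list \<Rightarrow> 'v option) \<Rightarrow> 'v \<Rightarrow> ('v \<times> nat) set" where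
  "profile V Vd E \<omega> U \<pi> v1 =
     {(u, q). (u, q) \<in> preprofile V Vd E \<omega> U \<pi> v1 \<and>
              \<not> (\<exists>q'. (u, q') \<in> preprofile V Vd E \<omega> U \<pi> v1 \<and> rew_le q q' \<and> q' \<noteq> q)}"

definition profile_le :: "('v \<times> nat) set \<Rightarrow> ('v \<times> nat) set \<Rightarrow> bool" where
  "profile_le y y' \<longleftrightarrow> (\<forall>(u, q) \<in> y. \<exists>q'. (u, q') \<in> y' \<and> rew_le q q')"

end

theory Submission
  imports Defs "HOL-Library.Infinite_Set"
begin


lemma INFM_shift: "(\<exists>\<^sub>\<infinity>n. P (n + k)) \<longleftrightarrow> (\<exists>\<^sub>\<infinity>n::nat. P n)"
proof
  assume "\<exists>\<^sub>\<infinity>n. P (n + k)"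
  then show "\<exists>\<^sub>\<infinity>n. P n" unfolding INFM_nat_le
    by (metis le_add1 order_trans)
next
  assume a: "\<exists>\<^sub>\<infinity>n. P n"
  show "\<exists>\<^sub>\<infinity>n. P (n + k)" unfolding INFM_nat_le
  proof
    fix m
    obtain n where "n \<ge> m + k" "P n" using a unfolding INFM_nat_le by blast
    then show "\<exists>n\<ge>m. P (n + k)" by (intro exI[of _ "n - k"]) auto
  qed
qed

locale game =
  fixes R :: "'n \<Rightarrow> 'n set" and own :: "'n \<Rightarrow> bool" and pr :: "'n \<Rightarrow> nat"
begin

definition play :: "'n set \<Rightarrow> (nat \<Rightarrow> 'n) \<Rightarrow> bool" where
  "play VV f \<longleftrightarrow> (\<forall>n. f n \<in> VV \<and> f (Suc n) \<in> R (f n))"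

definition conf :: "bool \<Rightarrow> ('n \<Rightarrow> 'n) \<Rightarrow> (nat \<Rightarrow> 'n) \<Rightarrow> bool" where
  "conf i \<sigma> f \<longleftrightarrow> (\<forall>n. own (f n) = i \<longrightarrow> f (Suc n) = \<sigma> (f n))"

definition winsp :: "bool \<Rightarrow> (nat \<Rightarrow> 'n) \<Rightarrow> bool" where
  "winsp i f \<longleftrightarrow> (even (LEAST q. \<exists>\<^sub>\<infinity>n. pr (f n) = q) = i)"

definition win_from :: "'n set \<Rightarrow> bool \<Rightarrow> ('n \<Rightarrow> 'n) \<Rightarrow> 'n \<Rightarrow> bool" where
  "win_from VV i \<sigma> x \<longleftrightarrow> (\<forall>f. play VV f \<and> conf i \<sigma> f \<and> f 0 = x \<longrightarrow> winsp i f)"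

definition strat :: "'n set \<Rightarrow> bool \<Rightarrow> ('n \<Rightarrow> 'n) \<Rightarrow> bool" where
  "strat VV i \<sigma> \<longleftrightarrow> (\<forall>x\<in>VV. own x = i \<longrightarrow> \<sigma> x \<in> R x \<inter> VV)"

lemma winsp_shift: "winsp i (\<lambda>n. f (n + k)) \<longleftrightarrow> winsp i f"
  unfolding winsp_def using INFM_shift[of "\<lambda>n. pr (f n) = _" k] by simp

lemma play_shift: "play VV f \<Longrightarrow> play VV (\<lambda>n. f (n + k))"
  unfolding play_def by simp

lemma conf_shift: "conf i \<sigma> f \<Longrightarrow> conf i \<sigma> (\<lambda>n. f (n + k))"
  unfolding conf_def by simp

lemma win_from_shift:
  assumes "win_from VV i \<sigma> (f k)" "play VV f" "conf i \<sigma> f"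
  shows "winsp i f"
proof -
  have "winsp i (\<lambda>n. f (n + k))"
    using assms play_shift conf_shift unfolding win_from_def by simp
  then show ?thesis by (simp add: winsp_shift)
qed

lemma win_from_step:
  assumes "win_from VV i \<sigma> x" "x \<in> VV" "y \<in> R x" "own x = i \<longrightarrow> y = \<sigma> x"
  shows "win_from VV i \<sigma> y"
  unfolding win_from_def
proof (intro allI impI)
  fix f assume f: "play VV f \<and> conf i \<sigma> f \<and> f 0 = y"
  define g where "g n = (case n of 0 \<Rightarrow> x | Suc m \<Rightarrow> f m)" for n
  have "play VV g" using f assms(2,3) unfolding play_def g_def by (auto split: nat.split)
  moreover have "conf i \<sigma> g" using f assms(4) unfolding conf_def g_def by (auto split: nat.split)
  ultimately have "winsp i g" using assms(1) unfolding win_from_def g_def by auto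
  then have "winsp i (\<lambda>n. g (n + 1))" by (simp only: winsp_shift)
  moreover have "(\<lambda>n. g (n + 1)) = f" by (auto simp: g_def)
  ultimately show "winsp i f" by simp
qed

lemma winsp_min:
  assumes "\<exists>\<^sub>\<infinity>n. pr (f n) = m" "\<And>n. m \<le> pr (f n)"
  shows "winsp i f \<longleftrightarrow> even m = i"
proof -
  have "(LEAST q. \<exists>\<^sub>\<infinity>n. pr (f n) = q) = m"
  proof (rule Least_equality)
    show "\<exists>\<^sub>\<infinity>n. pr (f n) = m" by fact
    fix q assume "\<exists>\<^sub>\<infinity>n. pr (f n) = q"
    then obtain n where "pr (f n) = q" using INFM_EX by blast
    then show "m \<le> q" using assms(2) by metis
  qed
  then show ?thesis unfolding winsp_def by simp
qed

lemma periodic_least: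
  assumes "seg \<noteq> []"
  shows "(LEAST q. \<exists>\<^sub>\<infinity>n. pr (seg ! (n mod length seg)) = q) = Min (pr ` set seg)"
proof -
  let ?L = "length seg"
  have iff: "(\<exists>\<^sub>\<infinity>n. pr (seg ! (n mod ?L)) = q) \<longleftrightarrow> q \<in> pr ` set seg" for q
  proof
    assume "\<exists>\<^sub>\<infinity>n. pr (seg ! (n mod ?L)) = q"
    then obtain n where "pr (seg ! (n mod ?L)) = q" using INFM_EX by blast
    then show "q \<in> pr ` set seg" using assms by auto
  next
    assume "q \<in> pr ` set seg"
    then obtain j where j: "j < ?L" "pr (seg ! j) = q" by (auto simp: in_set_conv_nth)
    show "\<exists>\<^sub>\<infinity>n. pr (seg ! (n mod ?L)) = q" unfolding INFM_nat
    proof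
      fix m
      have "j + ?L * (m + 1) > m" using j by (cases ?L) auto
      moreover have "(j + ?L * (m + 1)) mod ?L = j" using j(1) by (metis mod_less mod_mult_self2 mult.commute)
      ultimately show "\<exists>n>m. pr (seg ! (n mod ?L)) = q" using j by metis
    qed
  qed
  show ?thesis
  proof (rule Least_equality)
    show "\<exists>\<^sub>\<infinity>n. pr (seg ! (n mod ?L)) = Min (pr ` set seg)"
      using iff assms by auto
    fix q assume "\<exists>\<^sub>\<infinity>n. pr (seg ! (n mod ?L)) = q"
    then show "Min (pr ` set seg) \<le> q" using iff by auto
  qed
qed

lemma periodic_play:
  assumes "seg \<noteq> []" "set seg \<subseteq> VV"
    and "\<And>j. j < length seg \<Longrightarrow> seg ! (Suc j mod length seg) \<in> R (seg ! j)"
  shows "play VV (\<lambda>n. seg ! (n mod length seg))"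
  unfolding play_def
proof
  fix n
  let ?L = "length seg"
  have l: "n mod ?L < ?L" using assms(1) by simp
  have "Suc n mod ?L = Suc (n mod ?L) mod ?L" by (simp add: mod_Suc_eq)
  then show "seg ! (n mod ?L) \<in> VV \<and> seg ! (Suc n mod ?L) \<in> R (seg ! (n mod ?L))"
    using assms(2) assms(3)[OF l] l by (auto simp: subset_iff)
qed

lemma periodic_conf:
  assumes "seg \<noteq> []"
    and "\<And>j. j < length seg \<Longrightarrow> own (seg ! j) = i \<Longrightarrow> seg ! (Suc j mod length seg) = \<sigma> (seg ! j)"
  shows "conf i \<sigma> (\<lambda>n. seg ! (n mod length seg))"
  unfolding conf_def
proof (intro allI impI)
  fix n
  let ?L = "length seg"
  have l: "n mod ?L < ?L" using assms(1) by simp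
  have "Suc n mod ?L = Suc (n mod ?L) mod ?L" by (simp add: mod_Suc_eq)
  moreover assume "own (seg ! (n mod ?L)) = i"
  ultimately show "seg ! (Suc n mod ?L) = \<sigma> (seg ! (n mod ?L))" using assms(2)[OF l] by simp
qed

lemma win_from_periodic:
  assumes "win_from VV i \<sigma> (hd seg)" "seg \<noteq> []" "set seg \<subseteq> VV"
    and "\<And>j. j < length seg \<Longrightarrow> seg ! (Suc j mod length seg) \<in> R (seg ! j)"
    and "\<And>j. j < length seg \<Longrightarrow> own (seg ! j) = i \<Longrightarrow> seg ! (Suc j mod length seg) = \<sigma> (seg ! j)"
  shows "even (Min (pr ` set seg)) = i"
proof -
  let ?f = "\<lambda>n. seg ! (n mod length seg)"
  have "winsp i ?f" using assms periodic_play periodic_conf unfolding win_from_def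
    by (simp add: hd_conv_nth)
  then show ?thesis unfolding winsp_def using periodic_least[OF assms(2)] by simp
qed

lemma win_from_sink:
  assumes "win_from VV i \<sigma> x" "x \<in> VV" "y \<in> R x" "y \<in> VV" "own x = i \<longrightarrow> y = \<sigma> x"
    "y \<in> R y" "own y = i \<longrightarrow> \<sigma> y = y"
  shows "even (pr y) = i"
proof -
  have "win_from VV i \<sigma> y" using win_from_step assms by blast
  then have "even (Min (pr ` set [y])) = i"
    using win_from_periodic[of VV i \<sigma> "[y]"] assms by auto
  then show ?thesis by simp
qed


fun attrk :: "'n set \<Rightarrow> bool \<Rightarrow> 'n set \<Rightarrow> nat \<Rightarrow> 'n set" where
  "attrk VV i X 0 = X \<inter> VV"
| "attrk VV i X (Suc k) = attrk VV i X k \<union>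
     {x \<in> VV. (own x = i \<and> (\<exists>y \<in> R x \<inter> VV. y \<in> attrk VV i X k)) \<or>
              (own x \<noteq> i \<and> (\<forall>y \<in> R x \<inter> VV. y \<in> attrk VV i X k))}"

definition attr :: "'n set \<Rightarrow> bool \<Rightarrow> 'n set \<Rightarrow> 'n set" where
  "attr VV i X = (\<Union>k. attrk VV i X k)"

definition rank :: "'n set \<Rightarrow> bool \<Rightarrow> 'n set \<Rightarrow> 'n \<Rightarrow> nat" where
  "rank VV i X x = (LEAST k. x \<in> attrk VV i X k)"

definition astr :: "'n set \<Rightarrow> bool \<Rightarrow> 'n set \<Rightarrow> 'n \<Rightarrow> 'n" where
  "astr VV i X x = (SOME y. y \<in> R x \<inter> VV \<and> y \<in> attrk VV i X (rank VV i X x - 1))"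

lemma attrk_mono: "k \<le> l \<Longrightarrow> attrk VV i X k \<subseteq> attrk VV i X l"
  by (induction l) (auto simp: le_Suc_eq)

lemma attrk_sub: "attrk VV i X k \<subseteq> VV"
  by (induction k) auto

lemma attr_sub: "attr VV i X \<subseteq> VV"
  unfolding attr_def using attrk_sub by blast

lemma X_attr: "X \<inter> VV \<subseteq> attr VV i X"
  unfolding attr_def using attrk.simps(1) by blast

lemma attr_own:
  assumes "x \<in> VV" "own x = i" "y \<in> R x" "y \<in> VV" "y \<in> attr VV i X"
  shows "x \<in> attr VV i X"
proof -
  obtain k where "y \<in> attrk VV i X k" using assms(5) unfolding attr_def by blast
  then have "x \<in> attrk VV i X (Suc k)" using assms by auto
  then show ?thesis unfolding attr_def by blast
qed

lemma attr_other:
  assumes "finite VV" "x \<in> VV" "own x \<noteq> i" "\<forall>y \<in> R x \<inter> VV. y \<in> attr VV i X"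
  shows "x \<in> attr VV i X"
proof -
  have "\<forall>y \<in> R x \<inter> VV. \<exists>k. y \<in> attrk VV i X k" using assms(4) unfolding attr_def by blast
  then obtain kf where kf: "\<forall>y \<in> R x \<inter> VV. y \<in> attrk VV i X (kf y)" by metis
  define K where "K = Max (kf ` (R x \<inter> VV))"
  have "\<forall>y \<in> R x \<inter> VV. y \<in> attrk VV i X K"
  proof
    fix y assume y: "y \<in> R x \<inter> VV"
    have "kf y \<le> K" unfolding K_def using y assms(1) by (intro Max_ge) auto
    then show "y \<in> attrk VV i X K" using kf y attrk_mono by blast
  qed
  then have "x \<in> attrk VV i X (Suc K)" using assms by auto
  then show ?thesis unfolding attr_def by blast
qed

lemma trap_own:
  assumes "finite VV" "x \<in> VV - attr VV i X" "own x = i"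
  shows "R x \<inter> VV \<subseteq> VV - attr VV i X"
  using attr_own[of x VV i] assms by blast

lemma trap_other:
  assumes "finite VV" "x \<in> VV - attr VV i X" "own x \<noteq> i"
  shows "\<exists>y \<in> R x \<inter> VV. y \<notin> attr VV i X"
  using attr_other[of VV x i] assms by blast

lemma rank_in:
  assumes "x \<in> attr VV i X"
  shows "x \<in> attrk VV i X (rank VV i X x)"
proof -
  obtain k where "x \<in> attrk VV i X k" using assms unfolding attr_def by blast
  then show ?thesis unfolding rank_def by (rule LeastI)
qed

lemma rank_le: "x \<in> attrk VV i X k \<Longrightarrow> rank VV i X x \<le> k"
  unfolding rank_def by (rule Least_le)

lemma rank_step:
  assumes "x \<in> attr VV i X" "x \<notin> X"
  obtains k where "rank VV i X x = Suc k"
    "x \<in> VV" "(own x = i \<and> (\<exists>y \<in> R x \<inter> VV. y \<in> attrk VV i X k)) \<or>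
              (own x \<noteq> i \<and> (\<forall>y \<in> R x \<inter> VV. y \<in> attrk VV i X k))"
proof -
  have r: "x \<in> attrk VV i X (rank VV i X x)" using rank_in assms by blast
  show ?thesis
  proof (cases "rank VV i X x")
    case 0
    then show ?thesis using r assms by simp
  next
    case (Suc k)
    have "x \<notin> attrk VV i X k" using rank_le[of x VV i X k] Suc by auto
    then show ?thesis using that Suc r by auto
  qed
qed

lemma astr_valid:
  assumes "x \<in> attr VV i X" "x \<notin> X" "own x = i"
  shows "astr VV i X x \<in> R x \<and> astr VV i X x \<in> VV \<and> astr VV i X x \<in> attr VV i X \<and>
         rank VV i X (astr VV i X x) < rank VV i X x"
proof -
  obtain k where k: "rank VV i X x = Suc k" "\<exists>y \<in> R x \<inter> VV. y \<in> attrk VV i X k"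
    using rank_step[OF assms(1,2)] assms(3) by metis
  then have "astr VV i X x \<in> R x \<inter> VV \<and> astr VV i X x \<in> attrk VV i X k"
    unfolding astr_def using someI_ex[of "\<lambda>y. y \<in> R x \<inter> VV \<and> y \<in> attrk VV i X (rank VV i X x - 1)"]
    by auto
  then show ?thesis using rank_le[of "astr VV i X x" VV i X k] k unfolding attr_def by auto
qed

lemma other_rank:
  assumes "x \<in> attr VV i X" "x \<notin> X" "own x \<noteq> i" "y \<in> R x" "y \<in> VV"
  shows "y \<in> attr VV i X \<and> rank VV i X y < rank VV i X x"
proof -
  obtain k where k: "rank VV i X x = Suc k" "\<forall>y \<in> R x \<inter> VV. y \<in> attrk VV i X k"
    using rank_step[OF assms(1,2)] assms(3) by metis
  then show ?thesis using assms rank_le[of y VV i X k] unfolding attr_def by auto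
qed

lemma attr_reach:
  assumes "play VV f" "f 0 \<in> attr VV i X"
    "\<forall>n. f n \<in> attr VV i X \<and> f n \<notin> X \<and> own (f n) = i \<longrightarrow> f (Suc n) = astr VV i X (f n)"
  shows "\<exists>k. f k \<in> X"
  using assms
proof (induction "rank VV i X (f 0)" arbitrary: f rule: less_induct)
  case less
  show ?case
  proof (cases "f 0 \<in> X")
    case True then show ?thesis by blast
  next
    case False
    have f1: "f 1 \<in> R (f 0)" "f 1 \<in> VV" using less.prems(1) unfolding play_def by (metis One_nat_def)+
    have "f 1 \<in> attr VV i X \<and> rank VV i X (f 1) < rank VV i X (f 0)"
    proof (cases "own (f 0) = i")
      case True
      then have "f 1 = astr VV i X (f 0)" using less.prems(3) False less.prems(2) by (metis One_nat_def)
      then show ?thesis using astr_valid[OF less.prems(2) False True] by simp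
    next
      case o: False
      show ?thesis using other_rank[OF less.prems(2) False o f1] .
    qed
    then have "\<exists>k. f (k + 1) \<in> X"
      using less.hyps[of "\<lambda>n. f (n + 1)"] play_shift[OF less.prems(1), of 1] less.prems(3) by auto
    then show ?thesis by blast
  qed
qed


lemma play_sub: "play VV f \<Longrightarrow> (\<forall>n. f n \<in> S) \<Longrightarrow> play S f"
  unfolding play_def by auto

lemma play_mono: "play S f \<Longrightarrow> S \<subseteq> VV \<Longrightarrow> play VV f"
  unfolding play_def by auto

lemma play_next: "play VV f \<Longrightarrow> f (Suc n) \<in> R (f n) \<and> f (Suc n) \<in> VV"
  unfolding play_def by auto

lemma bool_cases2: "(j::bool) = i \<or> j = (\<not> i)" by auto

theorem zielonka:
  assumes "finite VV" "\<forall>x\<in>VV. R x \<inter> VV \<noteq> {}"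
  shows "\<exists>\<sigma>. (\<forall>i. strat VV i (\<sigma> i)) \<and> (\<forall>x\<in>VV. \<exists>i. win_from VV i (\<sigma> i) x)"
  using assms
proof (induction VV rule: finite_psubset_induct)
  case (psubset VV)
  note fin = psubset.hyps(1)
  note nd = psubset.prems
  show ?case
  proof (cases "VV = {}")
    case True
    then show ?thesis by (intro exI[of _ "\<lambda>i x. x"]) (auto simp: strat_def)
  next
    case nonempty: False
    define sel where "sel x = (SOME y. y \<in> R x \<inter> VV)" for x
    have sel: "x \<in> VV \<Longrightarrow> sel x \<in> R x \<and> sel x \<in> VV" for x
      unfolding sel_def using nd someI_ex[of "\<lambda>y. y \<in> R x \<inter> VV"] by blast
    define m where "m = Min (pr ` VV)"
    define i where "i = even m"
    define P where "P = {x\<in>VV. pr x = m}"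
    define A where "A = attr VV i P"
    define C where "C = VV - A"
    have mle: "x \<in> VV \<Longrightarrow> m \<le> pr x" for x unfolding m_def using fin by simp
    have "m \<in> pr ` VV" unfolding m_def using fin nonempty by simp
    then have "P \<noteq> {}" unfolding P_def by auto
    then have "P \<inter> VV \<noteq> {}" unfolding P_def by auto
    then have "C \<subset> VV" unfolding C_def A_def using X_attr[of P VV i] attr_sub by blast
    have ndC: "\<forall>x\<in>C. R x \<inter> C \<noteq> {}"
    proof
      fix x assume x: "x \<in> C"
      show "R x \<inter> C \<noteq> {}"
      proof (cases "own x = i")
        case True
        then show ?thesis using trap_own[OF fin, of x i P] x nd unfolding C_def A_def by blast
      next
        case False
        then show ?thesis using trap_other[OF fin, of x i P] x unfolding C_def A_def by blast
      qed
    qed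
    obtain \<sigma>' where s'1: "\<forall>j. strat C j (\<sigma>' j)" and s'2: "\<forall>x\<in>C. \<exists>j. win_from C j (\<sigma>' j) x"
      using psubset.IH[OF \<open>C \<subset> VV\<close>] ndC by blast
    define W where "W = {x \<in> C. win_from C (\<not> i) (\<sigma>' (\<not> i)) x}"
    show ?thesis
    proof (cases "W = {}")
      case True
      define \<tau> where "\<tau> x = (if x \<in> C then \<sigma>' i x else if x \<in> A - P then astr VV i P x else sel x)" for x
      define \<sigma>n where "\<sigma>n j = (if j = i then \<tau> else sel)" for j
      have st: "strat VV j (\<sigma>n j)" for j
      proof (cases "j = i")
        case True
        show ?thesis unfolding strat_def
        proof (intro ballI impI)
          fix x assume x: "x \<in> VV" "own x = j"
          show "\<sigma>n j x \<in> R x \<inter> VV"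
          proof -
            consider "x \<in> C" | "x \<notin> C" "x \<in> A - P" | "x \<notin> C" "x \<notin> A - P" by blast
            then show ?thesis
            proof cases
              case 1 then show ?thesis using s'1 x True unfolding strat_def \<sigma>n_def \<tau>_def C_def by auto
            next
              case 2 then show ?thesis using astr_valid[of x VV i P] x True unfolding \<sigma>n_def \<tau>_def A_def by auto
            next
              case 3 then show ?thesis using sel x True unfolding \<sigma>n_def \<tau>_def by auto
            qed
          qed
        qed
      next
        case False
        then show ?thesis using sel unfolding strat_def \<sigma>n_def by auto
      qed
      have win: "win_from VV i \<tau> x" if "x \<in> VV" for x
        unfolding win_from_def
      proof (intro allI impI)
        fix f assume f: "play VV f \<and> conf i \<tau> f \<and> f 0 = x"
        have fV: "f n \<in> VV" for n using f unfolding play_def by auto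
        show "winsp i f"
        proof (cases "\<exists>\<^sub>\<infinity>n. f n \<in> P")
          case True
          have "\<exists>\<^sub>\<infinity>n. pr (f n) = m" using True by (rule INFM_mono) (simp add: P_def)
          then show ?thesis using winsp_min[of f m i] mle fV i_def by auto
        next
          case False
          then obtain N where N: "\<forall>n\<ge>N. f n \<notin> P" unfolding not_INFM MOST_nat_le by blast
          have inC: "f n \<in> C" if "n \<ge> N" for n
          proof (rule ccontr)
            assume "f n \<notin> C"
            then have fA: "f n \<in> A" using fV unfolding C_def by auto
            let ?g = "\<lambda>k. f (k + n)"
            have "play VV ?g" using f play_shift by blast
            moreover have "\<forall>k. ?g k \<in> attr VV i P \<and> ?g k \<notin> P \<and> own (?g k) = i \<longrightarrow> ?g (Suc k) = astr VV i P (?g k)"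
              using f unfolding conf_def \<tau>_def C_def A_def by auto
            ultimately obtain k where "?g k \<in> P" using attr_reach[of VV ?g i P] fA unfolding A_def by auto
            then show False using N that by auto
          qed
          let ?g = "\<lambda>k. f (k + N)"
          have "play C ?g" using play_sub[of VV ?g C] play_shift f inC by auto
          moreover have "conf i (\<sigma>' i) ?g" using f inC unfolding conf_def \<tau>_def by auto
          moreover have "win_from C i (\<sigma>' i) (?g 0)"
          proof -
            obtain j where jw: "win_from C j (\<sigma>' j) (?g 0)" using s'2 inC by auto
            moreover have "j \<noteq> (\<not> i)"
            proof
              assume "j = (\<not> i)"
              then have "?g 0 \<in> W" using calculation inC unfolding W_def by auto
              then show False using True by auto
            qed
            ultimately have "j = i" by auto
            then show ?thesis using jw by simp
          qed
          ultimately have "winsp i ?g" unfolding win_from_def by auto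
          then show ?thesis by (simp add: winsp_shift)
        qed
      qed
      show ?thesis
        using st win by (intro exI[of _ \<sigma>n]) (auto simp: \<sigma>n_def)
    next
      case False
      define B where "B = attr VV (\<not> i) W"
      define D where "D = VV - B"
      have WC: "W \<subseteq> C" unfolding W_def by auto
      have CV: "C \<subseteq> VV" unfolding C_def by auto
      have "W \<subseteq> B" unfolding B_def using X_attr[of W VV "\<not> i"] WC CV by auto
      then have "D \<subset> VV" using False WC CV unfolding D_def B_def using attr_sub by blast
      have ndD: "\<forall>x\<in>D. R x \<inter> D \<noteq> {}"
      proof
        fix x assume x: "x \<in> D"
        show "R x \<inter> D \<noteq> {}"
        proof (cases "own x = (\<not> i)")
          case True
          then show ?thesis using trap_own[OF fin, of x "\<not> i" W] x nd unfolding D_def B_def by blast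
        next
          case False
          then show ?thesis using trap_other[OF fin, of x "\<not> i" W] x unfolding D_def B_def by blast
        qed
      qed
      obtain \<sigma>'' where s''1: "\<forall>j. strat D j (\<sigma>'' j)" and s''2: "\<forall>x\<in>D. \<exists>j. win_from D j (\<sigma>'' j) x"
        using psubset.IH[OF \<open>D \<subset> VV\<close>] ndD by blast
      define \<tau>i where "\<tau>i x = (if x \<in> D then \<sigma>'' i x else sel x)" for x
      define \<tau>n where "\<tau>n x = (if x \<in> W then \<sigma>' (\<not> i) x else if x \<in> B then astr VV (\<not> i) W x
                                else if x \<in> D then \<sigma>'' (\<not> i) x else sel x)" for x
      define \<sigma>n where "\<sigma>n j = (if j = i then \<tau>i else \<tau>n)" for j
      have DV: "D \<subseteq> VV" unfolding D_def by auto
      have st: "strat VV j (\<sigma>n j)" for j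
      proof (cases "j = i")
        case True
        show ?thesis unfolding strat_def
        proof (intro ballI impI)
          fix x assume x: "x \<in> VV" "own x = j"
          show "\<sigma>n j x \<in> R x \<inter> VV"
            using s''1 x True sel DV unfolding strat_def \<sigma>n_def \<tau>i_def by auto
        qed
      next
        case False
        then have ji: "j = (\<not> i)" by auto
        show ?thesis unfolding strat_def
        proof (intro ballI impI)
          fix x assume x: "x \<in> VV" "own x = j"
          show "\<sigma>n j x \<in> R x \<inter> VV"
          proof -
            consider "x \<in> W" | "x \<notin> W" "x \<in> B" | "x \<notin> B" "x \<in> D" | "x \<notin> B" "x \<notin> D" by blast
            then show ?thesis
            proof cases
              case 1
              then have "x \<in> C" using WC by auto
              then have "\<sigma>' (\<not> i) x \<in> R x \<inter> C" using s'1 x ji unfolding strat_def by auto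
              then show ?thesis using 1 ji CV unfolding \<sigma>n_def \<tau>n_def by auto
            next
              case 2 then show ?thesis using astr_valid[of x VV "\<not> i" W] x ji unfolding \<sigma>n_def \<tau>n_def B_def by auto
            next
              case 3
              then have "x \<notin> W" using \<open>W \<subseteq> B\<close> by auto
              moreover have "\<sigma>'' (\<not> i) x \<in> R x \<inter> D" using 3 s''1 x ji unfolding strat_def by auto
              ultimately show ?thesis using 3 ji DV unfolding \<sigma>n_def \<tau>n_def by auto
            next
              case 4 then show ?thesis using x unfolding D_def by auto
            qed
          qed
        qed
      qed
      have winW: "win_from VV (\<not> i) \<tau>n y" if "y \<in> W" for y
        unfolding win_from_def
      proof (intro allI impI)
        fix f assume f: "play VV f \<and> conf (\<not> i) \<tau>n f \<and> f 0 = y"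
        have inW: "f n \<in> W" for n
        proof (induction n)
          case 0 then show ?case using f that by auto
        next
          case (Suc n)
          have fn: "f n \<in> C" "win_from C (\<not> i) (\<sigma>' (\<not> i)) (f n)" using Suc WC unfolding W_def by auto
          have nx: "f (Suc n) \<in> R (f n)" "f (Suc n) \<in> VV" using f play_next by blast+
          have cf: "own (f n) = (\<not> i) \<longrightarrow> f (Suc n) = \<sigma>' (\<not> i) (f n)"
            using f Suc unfolding conf_def \<tau>n_def by auto
          have "f (Suc n) \<in> C"
          proof (cases "own (f n) = i")
            case True
            then show ?thesis using trap_own[OF fin, of "f n" i P] fn nx unfolding C_def A_def by blast
          next
            case False
            then show ?thesis using cf s'1 fn unfolding strat_def by auto
          qed
          then show ?case using win_from_step[OF fn(2) fn(1) nx(1) cf] unfolding W_def by auto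
        qed
        have "play C f" using play_sub[of VV f C] f inW WC by auto
        moreover have "conf (\<not> i) (\<sigma>' (\<not> i)) f" using f inW unfolding conf_def \<tau>n_def by auto
        ultimately show "winsp (\<not> i) f" using that f unfolding W_def win_from_def by auto
      qed
      have winB: "win_from VV (\<not> i) \<tau>n y" if yB: "y \<in> B" for y
        unfolding win_from_def
      proof (intro allI impI)
        fix f assume f: "play VV f \<and> conf (\<not> i) \<tau>n f \<and> f 0 = y"
        have "\<forall>n. f n \<in> attr VV (\<not> i) W \<and> f n \<notin> W \<and> own (f n) = (\<not> i) \<longrightarrow> f (Suc n) = astr VV (\<not> i) W (f n)"
          using f unfolding conf_def \<tau>n_def B_def by auto
        then obtain k where "f k \<in> W" using attr_reach[of VV f "\<not> i" W] f yB unfolding B_def by auto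
        then show "winsp (\<not> i) f" using win_from_shift winW f by blast
      qed
      have winDn: "win_from VV (\<not> i) \<tau>n x" if "x \<in> D" "win_from D (\<not> i) (\<sigma>'' (\<not> i)) x" for x
        unfolding win_from_def
      proof (intro allI impI)
        fix f assume f: "play VV f \<and> conf (\<not> i) \<tau>n f \<and> f 0 = x"
        show "winsp (\<not> i) f"
        proof (cases "\<forall>n. f n \<in> D")
          case True
          have "play D f" using play_sub[of VV f D] f True by auto
          moreover have "conf (\<not> i) (\<sigma>'' (\<not> i)) f" using f True \<open>W \<subseteq> B\<close>
            unfolding conf_def \<tau>n_def D_def by auto
          ultimately show ?thesis using that f unfolding win_from_def by auto
        next
          case False
          then obtain k where "f k \<notin> D" by auto
          then have "f k \<in> B" using f unfolding play_def D_def by auto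
          then show ?thesis using win_from_shift winB f by blast
        qed
      qed
      have winDi: "win_from VV i \<tau>i x" if "x \<in> D" "win_from D i (\<sigma>'' i) x" for x
        unfolding win_from_def
      proof (intro allI impI)
        fix f assume f: "play VV f \<and> conf i \<tau>i f \<and> f 0 = x"
        have inD: "f n \<in> D" for n
        proof (induction n)
          case 0 then show ?case using f that by auto
        next
          case (Suc n)
          have nx: "f (Suc n) \<in> R (f n)" "f (Suc n) \<in> VV" using f play_next by blast+
          show ?case
          proof (cases "own (f n) = (\<not> i)")
            case True
            then show ?thesis using trap_own[OF fin, of "f n" "\<not> i" W] Suc nx unfolding D_def B_def by blast
          next
            case False
            then have "f (Suc n) = \<sigma>'' i (f n)" using f Suc unfolding conf_def \<tau>i_def by auto
            then show ?thesis using s''1 False Suc unfolding strat_def by auto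
          qed
        qed
        have "play D f" using play_sub[of VV f D] f inD by auto
        moreover have "conf i (\<sigma>'' i) f" using f inD unfolding conf_def \<tau>i_def by auto
        ultimately show "winsp i f" using that f unfolding win_from_def by auto
      qed
      have "\<forall>x\<in>VV. \<exists>j. win_from VV j (\<sigma>n j) x"
      proof
        fix x assume x: "x \<in> VV"
        show "\<exists>j. win_from VV j (\<sigma>n j) x"
        proof (cases "x \<in> B")
          case True
          then show ?thesis using winB by (intro exI[of _ "\<not> i"]) (auto simp: \<sigma>n_def)
        next
          case False
          then have xD: "x \<in> D" using x unfolding D_def by auto
          then obtain j where j: "win_from D j (\<sigma>'' j) x" using s''2 by blast
          show ?thesis
          proof (cases "j = i")
            case True
            then show ?thesis using winDi xD j by (intro exI[of _ i]) (auto simp: \<sigma>n_def)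
          next
            case False
            then have "j = (\<not> i)" by auto
            then show ?thesis using winDn xD j by (intro exI[of _ "\<not> i"]) (auto simp: \<sigma>n_def)
          qed
        qed
      qed
      then show ?thesis using st by blast
    qed
  qed
qed

end



lemma conforming_single[simp]: "conforming V Vd E \<pi> [x] \<longleftrightarrow> x \<in> V"
  unfolding conforming_def by auto

lemma conforming_snoc:
  assumes "p \<noteq> []"
  shows "conforming V Vd E \<pi> (p @ [w]) \<longleftrightarrow>
    conforming V Vd E \<pi> p \<and> w \<in> V \<and> (last p, w) \<in> E \<and> (last p \<in> Vd \<longrightarrow> \<pi> p = Some w)"
proof -
  have lp: "last p = p ! (length p - 1)" using assms by (simp add: last_conv_nth)
  show ?thesis
  proof
    assume c: "conforming V Vd E \<pi> (p @ [w])"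
    have A: "(p @ [w]) ! i \<in> V" if "i < Suc (length p)" for i
      using c that unfolding conforming_def by (metis length_append_singleton nth_mem subsetD)
    have B: "((p @ [w]) ! i, (p @ [w]) ! Suc i) \<in> E \<and>
        ((p @ [w]) ! i \<in> Vd \<longrightarrow> \<pi> (take (Suc i) (p @ [w])) = Some ((p @ [w]) ! Suc i))"
      if "Suc i < Suc (length p)" for i
      using c that unfolding conforming_def by auto
    have "conforming V Vd E \<pi> p"
      unfolding conforming_def
    proof (intro conjI allI impI)
      show "p \<noteq> []" by fact
      show "set p \<subseteq> V" using c unfolding conforming_def by auto
    next
      fix i assume i: "Suc i < length p"
      then show "(p ! i, p ! Suc i) \<in> E" using B[of i] by (simp add: nth_append)
    next
      fix i assume i: "Suc i < length p" "p ! i \<in> Vd"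
      then show "\<pi> (take (Suc i) p) = Some (p ! Suc i)" using B[of i] by (simp add: nth_append)
    qed
    moreover have "w \<in> V" using c unfolding conforming_def by auto
    moreover have "(last p, w) \<in> E \<and> (last p \<in> Vd \<longrightarrow> \<pi> p = Some w)"
      using B[of "length p - 1"] assms lp by (simp add: nth_append)
    ultimately show "conforming V Vd E \<pi> p \<and> w \<in> V \<and> (last p, w) \<in> E \<and> (last p \<in> Vd \<longrightarrow> \<pi> p = Some w)"
      by blast
  next
    assume r: "conforming V Vd E \<pi> p \<and> w \<in> V \<and> (last p, w) \<in> E \<and> (last p \<in> Vd \<longrightarrow> \<pi> p = Some w)"
    show "conforming V Vd E \<pi> (p @ [w])"
      unfolding conforming_def
    proof (intro conjI allI impI)
      show "p @ [w] \<noteq> []" by simp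
      show "set (p @ [w]) \<subseteq> V" using r unfolding conforming_def by auto
    next
      fix i assume i: "Suc i < length (p @ [w])"
      show "((p @ [w]) ! i, (p @ [w]) ! Suc i) \<in> E"
      proof (cases "Suc i < length p")
        case True then show ?thesis using r unfolding conforming_def by (simp add: nth_append)
      next
        case False
        then have "i = length p - 1" using i by simp
        then show ?thesis using r assms lp by (simp add: nth_append)
      qed
    next
      fix i assume i: "Suc i < length (p @ [w])" "(p @ [w]) ! i \<in> Vd"
      show "\<pi> (take (Suc i) (p @ [w])) = Some ((p @ [w]) ! Suc i)"
      proof (cases "Suc i < length p")
        case True then show ?thesis using r i unfolding conforming_def by (simp add: nth_append)
      next
        case False
        then have "i = length p - 1" using i by simp
        then show ?thesis using r assms lp i by (simp add: nth_append)
      qed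
    qed
  qed
qed

lemma conforming_take:
  assumes "conforming V Vd E \<pi> p" "0 < k"
  shows "conforming V Vd E \<pi> (take k p)"
  using assms unfolding conforming_def
  by (auto simp: min_def dest: in_set_takeD)


abbreviation ext_conf where
  "ext_conf V Vd E U \<pi> \<equiv> conforming (ext_V V) (ext_Vd Vd) (ext_E E Vd U) (ext_strat V Vd E U \<pi>)"

lemma ext_strat_map: "ext_strat V Vd E U \<pi> (map Some p) =
  (case \<pi> p of Some w \<Rightarrow> Some (Some w)
   | None \<Rightarrow> (if conforming V Vd E \<pi> p \<and> last p \<in> Vd \<inter> U then Some None else None))"
proof -
  have "None \<notin> set (map Some p)" by auto
  moreover have "map the (map Some p) = p" by (induction p) auto
  ultimately show ?thesis unfolding ext_strat_def by simp
qed

lemma ext_conf_map: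
  "ext_conf V Vd E U \<pi> (map Some p) \<longleftrightarrow> conforming V Vd E \<pi> p"
proof (induction p rule: rev_induct)
  case Nil
  then show ?case unfolding conforming_def by simp
next
  case (snoc x p)
  show ?case
  proof (cases "p = []")
    case True
    then show ?thesis by (auto simp: ext_V_def)
  next
    case False
    have lm: "last (map Some p) = Some (last p)" using False by (simp add: last_map)
    have "ext_conf V Vd E U \<pi> (map Some (p @ [x])) = ext_conf V Vd E U \<pi> (map Some p @ [Some x])" by simp
    also have "\<dots> \<longleftrightarrow> ext_conf V Vd E U \<pi> (map Some p) \<and> Some x \<in> ext_V V \<and>
        (Some (last p), Some x) \<in> ext_E E Vd U \<and>
        (Some (last p) \<in> ext_Vd Vd \<longrightarrow> ext_strat V Vd E U \<pi> (map Some p) = Some (Some x))"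
      using conforming_snoc[of "map Some p"] False lm by simp
    also have "\<dots> \<longleftrightarrow> conforming V Vd E \<pi> p \<and> x \<in> V \<and> (last p, x) \<in> E \<and> (last p \<in> Vd \<longrightarrow> \<pi> p = Some x)"
      using snoc.IH by (auto simp: ext_V_def ext_E_def ext_Vd_def ext_strat_map split: option.splits)
    also have "\<dots> \<longleftrightarrow> conforming V Vd E \<pi> (p @ [x])" using conforming_snoc[OF False] by simp
    finally show ?thesis .
  qed
qed

lemma ext_noNone:
  assumes "ext_conf V Vd E U \<pi> ps" "Suc i < length ps"
  shows "ps ! i \<noteq> None"
  using assms unfolding conforming_def ext_E_def by auto

lemma ext_map_the:
  assumes "ext_conf V Vd E U \<pi> ps" "None \<notin> set ps"
  shows "ps = map Some (map the ps)"
  using assms(2) by (induction ps) auto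

lemma fin_win:
  assumes ps: "partial_strategy V Vd E U \<pi> v"
    and c: "ext_conf V Vd E U \<pi> ps" and hd: "hd ps = Some v"
    and mx: "\<not> (\<exists>w. ext_conf V Vd E U \<pi> (ps @ [w]))"
  shows "last ps \<notin> ext_Vd Vd"
proof
  assume l: "last ps \<in> ext_Vd Vd"
  have ne: "ps \<noteq> []" using c unfolding conforming_def by auto
  have nN: "None \<notin> set ps"
  proof
    assume "None \<in> set ps"
    then obtain i where i: "i < length ps" "ps ! i = None" by (auto simp: in_set_conv_nth)
    show False
    proof (cases "Suc i < length ps")
      case True then show False using ext_noNone[OF c True] i by auto
    next
      case False
      then have "i = length ps - 1" using i by auto
      then have "last ps = None" using i ne by (simp add: last_conv_nth)
      then show False using l unfolding ext_Vd_def by auto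
    qed
  qed
  define p where "p = map the ps"
  have psp: "ps = map Some p" unfolding p_def using ext_map_the[OF c nN] .
  have ne': "p \<noteq> []" using ne psp by auto
  have cp: "conforming V Vd E \<pi> p" using c psp ext_conf_map[of V Vd E U \<pi> p] by simp
  have hp: "hd p = v" using hd psp ne' by (cases p) auto
  have lp: "last ps = Some (last p)" using psp ne' by (simp add: last_map)
  then have dVd: "last p \<in> Vd" using l unfolding ext_Vd_def by auto
  show False
  proof (cases "\<pi> p")
    case (Some w)
    then have "conforming V Vd E \<pi> (p @ [w])" using ps unfolding partial_strategy_def by (auto simp: dom_def)
    then have "ext_conf V Vd E U \<pi> (map Some (p @ [w]))" using ext_conf_map[of V Vd E U \<pi> "p @ [w]"] by simp
    then show False using mx psp by auto
  next
    case None
    have ps2: "\<forall>p. conforming V Vd E \<pi> p \<and> hd p = v \<and> last p \<in> Vd - U \<longrightarrow> p \<in> dom \<pi>"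
      using ps unfolding partial_strategy_def by blast
    have "p \<notin> dom \<pi>" using None by auto
    then have "last p \<notin> Vd - U" using ps2 cp hp by blast
    then have "last p \<in> U" using dVd by blast
    have "ext_conf V Vd E U \<pi> (ps @ [None])"
      using conforming_snoc[OF ne, of "ext_V V" "ext_Vd Vd" "ext_E E Vd U" "ext_strat V Vd E U \<pi>" None]
        c lp dVd \<open>last p \<in> U\<close> None cp psp
      by (simp add: ext_V_def ext_E_def ext_strat_map)
    then show False using mx by auto
  qed
qed

lemma inf_ext_Some:
  assumes "inf_conforming (ext_V V) (ext_Vd Vd) (ext_E E Vd U) (ext_strat V Vd E U \<pi>) f"
  shows "f n \<noteq> None"
proof -
  have "ext_conf V Vd E U \<pi> (map f [0..<Suc (Suc n)])" using assms unfolding inf_conforming_def by blast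
  from ext_noNone[OF this, of n] show ?thesis by (simp add: nth_append)
qed

lemma inf_ext_conf:
  assumes "inf_conforming (ext_V V) (ext_Vd Vd) (ext_E E Vd U) (ext_strat V Vd E U \<pi>) f" "n > 0"
  shows "conforming V Vd E \<pi> (map (\<lambda>k. the (f k)) [0..<n])"
proof -
  have "map f [0..<n] = map Some (map (\<lambda>k. the (f k)) [0..<n])"
    using inf_ext_Some[OF assms(1)] by (auto intro: nth_equalityI)
  moreover have "ext_conf V Vd E U \<pi> (map f [0..<n])" using assms unfolding inf_conforming_def by blast
  ultimately show ?thesis using ext_conf_map by metis
qed

lemma conf_inf_ext:
  assumes "\<And>n. n > 0 \<Longrightarrow> conforming V Vd E \<pi> (map F [0..<n])"
  shows "inf_conforming (ext_V V) (ext_Vd Vd) (ext_E E Vd U) (ext_strat V Vd E U \<pi>) (\<lambda>n. Some (F n))"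
  unfolding inf_conforming_def
proof (intro allI impI)
  fix n :: nat assume "n > 0"
  have "map (\<lambda>n. Some (F n)) [0..<n] = map Some (map F [0..<n])" by simp
  then show "ext_conf V Vd E U \<pi> (map (\<lambda>n. Some (F n)) [0..<n])"
    using ext_conf_map assms \<open>n > 0\<close> by metis
qed

lemma rew_le_total: "rew_le p q \<or> rew_le q p"
  unfolding rew_le_def by auto

lemma rew_le_trans: "rew_le p q \<Longrightarrow> rew_le q r \<Longrightarrow> rew_le p r"
  unfolding rew_le_def by auto

lemma rew_le_antisym: "rew_le p q \<Longrightarrow> rew_le q p \<Longrightarrow> p = q"
  unfolding rew_le_def by auto

lemma rew_le_refl: "rew_le p p"
  unfolding rew_le_def by auto

lemma rew_max_ex:
  assumes "finite S" "S \<noteq> {}"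
  shows "\<exists>q\<in>S. \<forall>q'\<in>S. rew_le q' q"
  using assms
proof (induction S rule: finite_ne_induct)
  case (singleton x) then show ?case using rew_le_refl by auto
next
  case (insert x F)
  then obtain q where q: "q \<in> F" "\<forall>q'\<in>F. rew_le q' q" by blast
  show ?case
  proof (cases "rew_le x q")
    case True then show ?thesis using q by auto
  next
    case False
    then have "rew_le q x" using rew_le_total by blast
    then show ?thesis using q rew_le_trans rew_le_refl by blast
  qed
qed

definition thr :: "nat \<Rightarrow> nat" where
  "thr Q = (if even Q then Q + 1 else Q - 1)"

lemma thr_iff: "even (min q (thr Q)) \<longleftrightarrow> rew_le q Q"
proof (cases "even Q")
  case True
  then show ?thesis unfolding thr_def rew_le_def min_def by (cases "even q") (auto, presburger+)
next
  case False
  then show ?thesis unfolding thr_def rew_le_def min_def by (cases "even q") (auto, presburger+)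
qed




datatype 'v hn = HN 'v | HS | HX 'v | HWin | HLose

locale setting =
  fixes V Vd U :: "'v set" and E :: "('v \<times> 'v) set" and \<omega> :: "'v \<Rightarrow> nat"
    and v :: 'v and \<pi> :: "'v list \<Rightarrow> 'v option"
  assumes finV: "finite V" and VdV: "Vd \<subseteq> V" and EV: "E \<subseteq> V \<times> V" and UV: "U \<subseteq> V"
    and vV: "v \<in> V" and pw: "partial_winning V Vd E \<omega> U \<pi> v"
    and vnot: "\<not> (v \<in> Vd \<and> v \<in> U)"
begin

definition Qs :: "'v \<Rightarrow> nat set" where
  "Qs u = {q. (u, q) \<in> preprofile V Vd E \<omega> U \<pi> v}"

definition Qm :: "'v \<Rightarrow> nat" where
  "Qm u = (SOME q. q \<in> Qs u \<and> (\<forall>q'\<in>Qs u. rew_le q' q))"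

definition st :: "'v hn" where
  "st = (if v \<in> U \<and> v \<notin> Vd then HS else HN v)"

definition sinkof :: "'v \<Rightarrow> 'v hn" where
  "sinkof w = (if w \<in> Vd then HLose else HWin)"

definition succs :: "'v \<Rightarrow> 'v set" where
  "succs w = {w'. (w, w') \<in> E}"

fun HR :: "'v hn \<Rightarrow> 'v hn set" where
  "HR (HN w) = HN ` succs w \<union> (if w \<in> U then {HX w} else {}) \<union> (if succs w = {} then {sinkof w} else {})"
| "HR HS = HN ` succs v \<union> (if succs v = {} then {sinkof v} else {})"
| "HR (HX u) = (if Qs u \<noteq> {} then {st} else {HLose})"
| "HR HWin = {HWin}"
| "HR HLose = {HLose}"

fun Hown :: "'v hn \<Rightarrow> bool" where
  "Hown (HN w) = (w \<in> Vd)"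
| "Hown HS = False"
| "Hown (HX u) = False"
| "Hown HWin = False"
| "Hown HLose = False"

fun Hpr :: "'v hn \<Rightarrow> nat" where
  "Hpr (HN w) = \<omega> w"
| "Hpr HS = \<omega> v"
| "Hpr (HX u) = (if Qs u \<noteq> {} then thr (Qm u) else 1)"
| "Hpr HWin = 0"
| "Hpr HLose = 1"

definition HV :: "'v hn set" where
  "HV = HN ` V \<union> {HS} \<union> HX ` U \<union> {HWin, HLose}"

definition cH :: "'v list \<Rightarrow> 'v hn" where
  "cH h = (if length h = 1 then st else HN (last h))"

sublocale H: game HR Hown Hpr .

lemma ps1: "p \<in> dom \<pi> \<Longrightarrow> p \<noteq> [] \<and> hd p = v \<and> conforming V Vd E \<pi> (p @ [the (\<pi> p)]) \<and> last p \<in> Vd"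
  using pw unfolding partial_winning_def partial_strategy_def by blast

lemma ps2: "conforming V Vd E \<pi> p \<Longrightarrow> hd p = v \<Longrightarrow> last p \<in> Vd \<Longrightarrow> last p \<notin> U \<Longrightarrow> p \<in> dom \<pi>"
  using pw unfolding partial_winning_def partial_strategy_def by blast

lemma pwin: "winning_from (ext_V V) (ext_Vd Vd) (ext_E E Vd U) (ext_\<omega> \<omega>) (ext_strat V Vd E U \<pi>) (Some v)"
  using pw unfolding partial_winning_def by blast

lemma finHV: "finite HV"
  unfolding HV_def using finV UV by (simp add: finite_subset)

lemma st_HV: "st \<in> HV" unfolding st_def HV_def using vV by auto

lemma Hpr_st: "Hpr st = \<omega> v" unfolding st_def by auto

lemma succs_V: "w' \<in> succs w \<Longrightarrow> w' \<in> V" unfolding succs_def using EV by auto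

lemma HR_HV: "x \<in> HV \<Longrightarrow> HR x \<subseteq> HV"
  unfolding HV_def using succs_V st_HV by (auto simp: sinkof_def HV_def split: if_splits)

lemma nd: "\<forall>x\<in>HV. HR x \<inter> HV \<noteq> {}"
proof
  fix x assume x: "x \<in> HV"
  have "HR x \<noteq> {}" by (cases x) (auto split: if_splits)
  then show "HR x \<inter> HV \<noteq> {}" using HR_HV[OF x] by auto
qed

lemma Qs_fin: "finite (Qs u)"
proof -
  have "Qs u \<subseteq> \<omega> ` V"
  proof
    fix q assume "q \<in> Qs u"
    then obtain p where p: "conforming V Vd E \<pi> p" "q = Min (\<omega> ` set p)"
      unfolding Qs_def preprofile_def by auto
    then have sub: "set p \<subseteq> V" and ne: "p \<noteq> []" unfolding conforming_def by auto
    have mi: "Min (\<omega> ` set p) \<in> \<omega> ` set p" using ne by (intro Min_in) auto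
    show "q \<in> \<omega> ` V" using p(2) mi sub by blast
  qed
  then show ?thesis using finV finite_subset by blast
qed

lemma Qm:
  assumes "Qs u \<noteq> {}"
  shows "Qm u \<in> Qs u \<and> (\<forall>q'\<in>Qs u. rew_le q' (Qm u))"
proof -
  have "\<exists>q. q \<in> Qs u \<and> (\<forall>q'\<in>Qs u. rew_le q' q)" using rew_max_ex[OF Qs_fin assms] by blast
  then show ?thesis unfolding Qm_def by (rule someI_ex)
qed

lemma Qm_profile:
  assumes "Qs u \<noteq> {}"
  shows "(u, Qm u) \<in> profile V Vd E \<omega> U \<pi> v"
proof -
  have m: "Qm u \<in> Qs u" "\<forall>q'\<in>Qs u. rew_le q' (Qm u)" using Qm[OF assms] by auto
  have "\<not> (\<exists>q'. (u, q') \<in> preprofile V Vd E \<omega> U \<pi> v \<and> rew_le (Qm u) q' \<and> q' \<noteq> Qm u)"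
  proof
    assume "\<exists>q'. (u, q') \<in> preprofile V Vd E \<omega> U \<pi> v \<and> rew_le (Qm u) q' \<and> q' \<noteq> Qm u"
    then obtain q' where "q' \<in> Qs u" "rew_le (Qm u) q'" "q' \<noteq> Qm u" unfolding Qs_def by auto
    then show False using m rew_le_antisym by metis
  qed
  moreover have "(u, Qm u) \<in> preprofile V Vd E \<omega> U \<pi> v" using m unfolding Qs_def by auto
  ultimately show ?thesis unfolding profile_def by simp
qed

lemma cH_HV:
  assumes "h \<noteq> []" "set h \<subseteq> V"
  shows "cH h \<in> HV"
proof -
  have "last h \<in> V" using assms last_in_set by blast
  then show ?thesis unfolding cH_def using st_HV by (auto simp: HV_def)
qed

lemma Hpr_cH: "h \<noteq> [] \<Longrightarrow> hd h = v \<Longrightarrow> Hpr (cH h) = \<omega> (last h)"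
  unfolding cH_def using Hpr_st by (cases h) auto

lemma cH_Vd: "h \<noteq> [] \<Longrightarrow> hd h = v \<Longrightarrow> last h \<in> Vd \<Longrightarrow> cH h = HN (last h)"
  unfolding cH_def st_def using vnot by (cases h) auto

lemma Hown_cH: "h \<noteq> [] \<Longrightarrow> hd h = v \<Longrightarrow> Hown (cH h) = (last h \<in> Vd)"
  unfolding cH_def st_def by (cases h) auto

lemma HN_in_cH:
  assumes "h \<noteq> []" "hd h = v" "HN w \<in> HR (cH h)"
  shows "(last h, w) \<in> E"
proof (cases "length h = 1")
  case True
  then have "last h = v" using assms by (cases h) auto
  then show ?thesis using assms True unfolding cH_def st_def
    by (auto simp: succs_def sinkof_def split: if_splits)
next
  case False
  then show ?thesis using assms unfolding cH_def by (auto simp: succs_def sinkof_def split: if_splits)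
qed

lemma cH_snoc: "h \<noteq> [] \<Longrightarrow> cH (h @ [w]) = HN w"
  unfolding cH_def by auto

lemma HN_succ_cH:
  assumes "h \<noteq> []" "hd h = v" "(last h, w) \<in> E"
  shows "HN w \<in> HR (cH h)"
proof (cases "length h = 1")
  case True
  then have "last h = v" using assms by (cases h) auto
  then show ?thesis using assms True unfolding cH_def st_def by (auto simp: succs_def)
next
  case False
  then show ?thesis using assms unfolding cH_def by (auto simp: succs_def)
qed


definition cHk :: "'v list \<Rightarrow> nat \<Rightarrow> 'v hn" where
  "cHk p k = cH (take (Suc k) p)"

lemma last_take_nth: "k < length p \<Longrightarrow> last (take (Suc k) p) = p ! k"
  by (simp add: take_Suc_conv_app_nth)

lemma hd_take: "p \<noteq> [] \<Longrightarrow> hd (take (Suc k) p) = hd p"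
  by (cases p) auto

lemma seg_lemma:
  assumes win: "H.win_from HV i \<sigma> st" and ne: "p \<noteq> []" and hd: "hd p = v" and sub: "set p \<subseteq> V"
    and uU: "last p \<in> U" and Q: "Qs (last p) \<noteq> {}"
    and steps: "\<And>k. Suc k < length p \<Longrightarrow> cHk p (Suc k) \<in> HR (cHk p k) \<and>
                    (Hown (cHk p k) = i \<longrightarrow> \<sigma> (cHk p k) = cHk p (Suc k))"
    and lastst: "HX (last p) \<in> HR (cH p) \<and> (Hown (cH p) = i \<longrightarrow> \<sigma> (cH p) = HX (last p))"
    and xst: "i = False \<longrightarrow> \<sigma> (HX (last p)) = st"
  shows "even (min (Min (\<omega> ` set p)) (thr (Qm (last p)))) = i"
proof -
  define u where "u = last p"
  define L where "L = length p"
  define seg where "seg = map (cHk p) [0..<L] @ [HX u]"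
  have L0: "L > 0" using ne unfolding L_def by auto
  have len: "length seg = Suc L" unfolding seg_def by simp
  have segk: "k < L \<Longrightarrow> seg ! k = cHk p k" for k unfolding seg_def by (simp add: nth_append)
  have segL: "seg ! L = HX u" unfolding seg_def by (simp add: nth_append)
  have cHkL: "cHk p (L - 1) = cH p" unfolding cHk_def L_def using L0 L_def by simp
  have cHk0: "cHk p 0 = st" unfolding cHk_def cH_def using ne by (cases p) auto
  have segne: "seg \<noteq> []" using len by auto
  then have hdseg: "hd seg = st" using segk[of 0] L0 cHk0 by (simp add: hd_conv_nth)
  have cHk_HV: "k < L \<Longrightarrow> cHk p k \<in> HV" for k
    unfolding cHk_def using cH_HV[of "take (Suc k) p"] ne sub by (auto dest: in_set_takeD)
  have uHV: "HX u \<in> HV" unfolding u_def HV_def using uU by auto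
  have setseg: "set seg \<subseteq> HV"
    unfolding seg_def using cHk_HV uHV by auto
  have edges: "seg ! (Suc j mod length seg) \<in> HR (seg ! j) \<and>
      (Hown (seg ! j) = i \<longrightarrow> seg ! (Suc j mod length seg) = \<sigma> (seg ! j))" if j: "j < length seg" for j
  proof -
    consider "Suc j < L" | "Suc j = L" | "j = L" using j len by linarith
    then show ?thesis
    proof cases
      case 1
      then have "Suc j mod length seg = Suc j" using len by simp
      then show ?thesis using steps[of j] 1 segk[of j] segk[of "Suc j"] unfolding L_def by auto
    next
      case 2
      then have "Suc j mod length seg = L" using len by simp
      moreover have "seg ! j = cH p" using segk[of j] 2 cHkL by auto
      ultimately show ?thesis using lastst segL u_def by auto
    next
      case 3
      then have "Suc j mod length seg = 0" using len by simp
      moreover have "seg ! 0 = st" using segk[of 0] L0 cHk0 by auto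
      ultimately show ?thesis using segL 3 Q xst u_def by auto
    qed
  qed
  have ev: "even (Min (Hpr ` set seg)) = i"
    using H.win_from_periodic[of HV i \<sigma> seg, OF _ segne] win hdseg setseg edges len by auto
  have "Hpr ` cHk p ` {0..<L} = \<omega> ` set p"
  proof -
    have "Hpr (cHk p k) = \<omega> (p ! k)" if "k < L" for k
    proof -
      have "take (Suc k) p \<noteq> []" "hd (take (Suc k) p) = v" using ne hd hd_take by auto
      then have "Hpr (cHk p k) = \<omega> (last (take (Suc k) p))" unfolding cHk_def by (rule Hpr_cH)
      then show ?thesis using last_take_nth[of k p] that L_def by simp
    qed
    then have "Hpr ` cHk p ` {0..<L} = (\<lambda>k. \<omega> (p ! k)) ` {0..<L}"
      by (auto simp: image_iff) (metis atLeastLessThan_iff zero_le)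
    also have "\<dots> = \<omega> ` set p" unfolding L_def by (auto simp: set_conv_nth image_iff) blast
    finally show ?thesis .
  qed
  moreover have "set seg = cHk p ` {0..<L} \<union> {HX u}" unfolding seg_def by auto
  ultimately have "Hpr ` set seg = insert (thr (Qm u)) (\<omega> ` set p)" using Q u_def by auto
  moreover have "Min (insert (thr (Qm u)) (\<omega> ` set p)) = min (Min (\<omega> ` set p)) (thr (Qm u))"
    using ne by (simp add: Min_insert min.commute)
  ultimately show ?thesis using ev u_def by simp
qed


definition nx :: "('v hn \<Rightarrow> 'v hn) \<Rightarrow> 'v list \<Rightarrow> 'v hn" where
  "nx \<tau> h = (if last h \<in> Vd then (case \<pi> h of Some w \<Rightarrow> HN w | None \<Rightarrow> HX (last h)) else \<tau> (cH h))"

primrec gseq :: "('v hn \<Rightarrow> 'v hn) \<Rightarrow> nat \<Rightarrow> 'v list" where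
  "gseq \<tau> 0 = [v]"
| "gseq \<tau> (Suc n) = (case nx \<tau> (gseq \<tau> n) of HN w \<Rightarrow> gseq \<tau> n @ [w] | _ \<Rightarrow> gseq \<tau> n)"

lemma conf_ne: "conforming V Vd E \<sigma> h \<Longrightarrow> h \<noteq> []"
  unfolding conforming_def by auto

lemma conf_set: "conforming V Vd E \<sigma> h \<Longrightarrow> set h \<subseteq> V"
  unfolding conforming_def by auto

lemma nx_valid:
  assumes tau: "H.strat HV False \<tau>" and c: "conforming V Vd E \<pi> h" and hd: "hd h = v"
  shows "nx \<tau> h \<in> HR (cH h) \<and> (Hown (cH h) = False \<longrightarrow> nx \<tau> h = \<tau> (cH h))"
proof -
  have ne: "h \<noteq> []" using conf_ne[OF c] .
  show ?thesis
  proof (cases "last h \<in> Vd")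
    case True
    then have ch: "cH h = HN (last h)" using cH_Vd ne hd by blast
    show ?thesis
    proof (cases "\<pi> h")
      case (Some w)
      then have "h \<in> dom \<pi>" by auto
      then have "conforming V Vd E \<pi> (h @ [w])" using ps1 Some by force
      then have "(last h, w) \<in> E" using conforming_snoc[OF ne] by blast
      then show ?thesis using True Some ch unfolding nx_def by (auto simp: succs_def)
    next
      case None
      then have "h \<notin> dom \<pi>" by auto
      then have "last h \<in> U" using ps2[OF c hd True] by blast
      then show ?thesis using True None ch unfolding nx_def by auto
    qed
  next
    case False
    then have o: "Hown (cH h) = False" using Hown_cH ne hd by blast
    have "cH h \<in> HV" using cH_HV ne conf_set[OF c] by blast
    then have "\<tau> (cH h) \<in> HR (cH h)" using tau o unfolding H.strat_def by blast
    then show ?thesis using False unfolding nx_def by auto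
  qed
qed

lemma nx_HN:
  assumes tau: "H.strat HV False \<tau>" and c: "conforming V Vd E \<pi> h" and hd: "hd h = v"
    and n: "nx \<tau> h = HN w"
  shows "conforming V Vd E \<pi> (h @ [w])"
proof -
  have ne: "h \<noteq> []" using conf_ne[OF c] .
  have "HN w \<in> HR (cH h)" using nx_valid[OF tau c hd] n by simp
  then have e: "(last h, w) \<in> E" using HN_in_cH ne hd by blast
  then have "w \<in> V" using EV by auto
  moreover have "last h \<in> Vd \<longrightarrow> \<pi> h = Some w"
    using n unfolding nx_def by (auto split: option.splits)
  ultimately show ?thesis using conforming_snoc[OF ne] c e by blast
qed

lemma gseq_prop:
  assumes tau: "H.strat HV False \<tau>"
  shows "(\<forall>j<k. \<exists>w. nx \<tau> (gseq \<tau> j) = HN w) \<Longrightarrow>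
    conforming V Vd E \<pi> (gseq \<tau> k) \<and> hd (gseq \<tau> k) = v \<and> length (gseq \<tau> k) = Suc k \<and>
    (\<forall>j\<le>k. take (Suc j) (gseq \<tau> k) = gseq \<tau> j)"
proof (induction k)
  case 0
  then show ?case using vV by simp
next
  case (Suc k)
  then have IH: "conforming V Vd E \<pi> (gseq \<tau> k) \<and> hd (gseq \<tau> k) = v \<and> length (gseq \<tau> k) = Suc k \<and>
    (\<forall>j\<le>k. take (Suc j) (gseq \<tau> k) = gseq \<tau> j)" by auto
  obtain w where w: "nx \<tau> (gseq \<tau> k) = HN w" using Suc.prems by auto
  have g: "gseq \<tau> (Suc k) = gseq \<tau> k @ [w]" using w by simp
  have c: "conforming V Vd E \<pi> (gseq \<tau> k @ [w])" using nx_HN[OF tau _ _ w] IH by blast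
  have ne: "gseq \<tau> k \<noteq> []" using IH by auto
  have t: "\<forall>j\<le>Suc k. take (Suc j) (gseq \<tau> k @ [w]) = gseq \<tau> j"
  proof (intro allI impI)
    fix j assume "j \<le> Suc k"
    then consider "j = Suc k" | "j \<le> k" by linarith
    then show "take (Suc j) (gseq \<tau> k @ [w]) = gseq \<tau> j"
    proof cases
      case 1 then show ?thesis using IH g by simp
    next
      case 2 then show ?thesis using IH by simp
    qed
  qed
  show ?case using g c IH ne t by simp
qed

lemma HWin_stuck:
  assumes tau: "H.strat HV False \<tau>" "H.win_from HV False \<tau> x" "x \<in> HV" "HWin \<in> HR x"
    "Hown x = False \<longrightarrow> \<tau> x = HWin"
  shows False
proof -
  have "HWin \<in> HV" unfolding HV_def by auto
  then have "\<tau> HWin = HWin" using tau(1) unfolding H.strat_def by auto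
  then have "even (Hpr HWin) = False"
    using H.win_from_sink[OF tau(2) tau(3) tau(4) \<open>HWin \<in> HV\<close>] assms(5) by auto
  then show False by simp
qed

lemma box_not_win:
  assumes tau: "H.strat HV False \<tau>" and win: "H.win_from HV False \<tau> st"
  shows False
proof (cases "\<forall>n. \<exists>w. nx \<tau> (gseq \<tau> n) = HN w")
  case True
  define g where "g = gseq \<tau>"
  have gp: "conforming V Vd E \<pi> (g k) \<and> hd (g k) = v \<and> length (g k) = Suc k \<and>
    (\<forall>j\<le>k. take (Suc j) (g k) = g j)" for k
    using gseq_prop[OF tau] True unfolding g_def by blast
  define F where "F n = last (g n)" for n
  have gF: "g n = map F [0..<Suc n]" for n
  proof (rule nth_equalityI)
    show "length (g n) = length (map F [0..<Suc n])" using gp by simp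
    fix j assume "j < length (g n)"
    then have j: "j < Suc n" using gp by simp
    have "g n ! j = last (take (Suc j) (g n))" using last_take_nth[of j "g n"] j gp by simp
    also have "\<dots> = F j" unfolding F_def using gp j by simp
    finally show "g n ! j = map F [0..<Suc n] ! j" using j by (simp del: upt_Suc)
  qed
  define f where "f n = cH (g n)" for n
  have gSuc: "\<exists>w. g (Suc n) = g n @ [w] \<and> nx \<tau> (g n) = HN w" for n
  proof -
    obtain w where w: "nx \<tau> (gseq \<tau> n) = HN w" using True by blast
    then show ?thesis unfolding g_def by simp
  qed
  have nxf: "f (Suc n) = nx \<tau> (g n)" for n
  proof -
    obtain w where w: "g (Suc n) = g n @ [w]" "nx \<tau> (g n) = HN w" using gSuc by blast
    have "g n \<noteq> []" using gp[of n] by auto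
    then show ?thesis unfolding f_def using w cH_snoc by simp
  qed
  have play: "H.play HV f"
    unfolding H.play_def
  proof
    fix n
    show "f n \<in> HV \<and> f (Suc n) \<in> HR (f n)"
      using cH_HV gp conf_ne conf_set nx_valid[OF tau, of "g n"] nxf unfolding f_def by metis
  qed
  have conf: "H.conf False \<tau> f"
    unfolding H.conf_def using nx_valid[OF tau] gp nxf unfolding f_def by metis
  have f0: "f 0 = st" unfolding f_def g_def cH_def by simp
  have wf: "H.winsp False f" using win play conf f0 unfolding H.win_from_def by blast
  have prF: "Hpr (f n) = \<omega> (F n)" for n
    unfolding f_def F_def using Hpr_cH gp conf_ne by metis
  have "inf_conforming (ext_V V) (ext_Vd Vd) (ext_E E Vd U) (ext_strat V Vd E U \<pi>) (\<lambda>n. Some (F n))"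
  proof (rule conf_inf_ext)
    fix n :: nat assume "n > 0"
    then have "map F [0..<n] = g (n - 1)" using gF[of "n - 1"] by simp
    then show "conforming V Vd E \<pi> (map F [0..<n])" using gp by simp
  qed
  moreover have "F 0 = v" unfolding F_def g_def by simp
  ultimately have "inf_won (ext_\<omega> \<omega>) (\<lambda>n. Some (F n))"
    using pwin unfolding winning_from_def by auto
  then have "even (LEAST q. \<exists>\<^sub>\<infinity>n. \<omega> (F n) = q)" unfolding inf_won_def ext_\<omega>_def by simp
  moreover have "\<not> even (LEAST q. \<exists>\<^sub>\<infinity>n. \<omega> (F n) = q)"
    using wf prF unfolding H.winsp_def by simp
  ultimately show False by blast
next
  case False
  define g where "g = gseq \<tau>"
  define n0 where "n0 = (LEAST n. \<not> (\<exists>w. nx \<tau> (g n) = HN w))"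
  have ex: "\<exists>n. \<not> (\<exists>w. nx \<tau> (g n) = HN w)" using False unfolding g_def by blast
  have n0: "\<not> (\<exists>w. nx \<tau> (g n0) = HN w)" unfolding n0_def by (rule LeastI_ex[OF ex])
  have bef: "\<forall>j<n0. \<exists>w. nx \<tau> (g j) = HN w" unfolding n0_def using not_less_Least by blast
  have gp: "conforming V Vd E \<pi> (g k) \<and> hd (g k) = v \<and> length (g k) = Suc k \<and>
    (\<forall>j\<le>k. take (Suc j) (g k) = g j)" if "k \<le> n0" for k
    using gseq_prop[OF tau, of k] bef that unfolding g_def by auto
  have gSuc: "\<exists>w. g (Suc k) = g k @ [w] \<and> nx \<tau> (g k) = HN w" if kn: "k < n0" for k
  proof -
    obtain w where w: "nx \<tau> (gseq \<tau> k) = HN w" using bef kn unfolding g_def by blast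
    then show ?thesis unfolding g_def by simp
  qed
  have nxc: "cH (g (Suc k)) = nx \<tau> (g k)" if kn: "k < n0" for k
  proof -
    obtain w where w: "g (Suc k) = g k @ [w]" "nx \<tau> (g k) = HN w" using gSuc[OF kn] by blast
    have "k \<le> n0" using kn by simp
    then have "g k \<noteq> []" using gp[of k] by auto
    then show ?thesis using w cH_snoc by simp
  qed
  have winc: "H.win_from HV False \<tau> (cH (g k))" if "k \<le> n0" for k
    using that
  proof (induction k)
    case 0 then show ?case using win unfolding g_def cH_def by simp
  next
    case (Suc k)
    then have k: "k < n0" by simp
    have IH: "H.win_from HV False \<tau> (cH (g k))" using Suc by simp
    have kl: "k \<le> n0" using k by simp
    have gk: "conforming V Vd E \<pi> (g k)" "hd (g k) = v" using gp[OF kl] by auto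
    have "cH (g k) \<in> HV" using cH_HV conf_ne[OF gk(1)] conf_set[OF gk(1)] by blast
    moreover have "nx \<tau> (g k) \<in> HR (cH (g k)) \<and> (Hown (cH (g k)) = False \<longrightarrow> nx \<tau> (g k) = \<tau> (cH (g k)))"
      using nx_valid[OF tau gk] .
    ultimately show ?case using H.win_from_step[OF IH] nxc[OF k] by auto
  qed
  define h where "h = g n0"
  have hp: "conforming V Vd E \<pi> h" "hd h = v" "length h = Suc n0" using gp[of n0] unfolding h_def by auto
  have hne: "h \<noteq> []" using hp by auto
  have hV: "set h \<subseteq> V" using conf_set hp by blast
  have nv: "nx \<tau> h \<in> HR (cH h) \<and> (Hown (cH h) = False \<longrightarrow> nx \<tau> h = \<tau> (cH h))"
    using nx_valid[OF tau hp(1,2)] .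
  have notHN: "\<forall>w. nx \<tau> h \<noteq> HN w" using n0 unfolding h_def by blast
  have hHV: "cH h \<in> HV" using cH_HV hne hV by blast
  have winh: "H.win_from HV False \<tau> (cH h)" using winc[of n0] unfolding h_def by simp
  have hcases: "nx \<tau> h = HWin \<and> Hown (cH h) = False \<or> (nx \<tau> h = HX (last h) \<and> last h \<in> U \<and> length h > 1)"
  proof (cases "last h \<in> Vd")
    case True
    then have x: "nx \<tau> h = HX (last h)" using notHN unfolding nx_def by (auto split: option.splits)
    then have "HX (last h) \<in> HR (cH h)" using nv by simp
    moreover have "cH h = HN (last h)" using cH_Vd hne hp True by blast
    ultimately have u: "last h \<in> U" by (auto simp: sinkof_def split: if_splits)
    have "length h \<noteq> 1" using u True vnot hp(2) hne by (cases h) auto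
    then show ?thesis using x u hne by (cases h) auto
  next
    case False
    then have o: "Hown (cH h) = False" using Hown_cH hne hp by blast
    show ?thesis
    proof (cases "length h = 1")
      case True
      then have lv: "last h = v" using hp hne by (cases h) auto
      have "cH h = st" using True unfolding cH_def by simp
      then have "nx \<tau> h \<in> HR st" using nv by simp
      then have "nx \<tau> h = HWin" using notHN False lv unfolding st_def
        by (auto simp: sinkof_def split: if_splits)
      then show ?thesis using o by simp
    next
      case ln: False
      then have "cH h = HN (last h)" unfolding cH_def by simp
      then have "nx \<tau> h \<in> HR (HN (last h))" using nv by simp
      then have "nx \<tau> h = HWin \<or> (nx \<tau> h = HX (last h) \<and> last h \<in> U)" using notHN False
        by (auto simp: sinkof_def split: if_splits)
      then show ?thesis using o ln hne by (cases h) auto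
    qed
  qed
  then show False
  proof
    assume a: "nx \<tau> h = HWin \<and> Hown (cH h) = False"
    show False using HWin_stuck[OF tau winh hHV] a nv by auto
  next
    assume a: "nx \<tau> h = HX (last h) \<and> last h \<in> U \<and> length h > 1"
    have ndom: "h \<notin> dom \<pi>"
    proof
      assume d: "h \<in> dom \<pi>"
      then have "last h \<in> Vd" using ps1 by blast
      then show False using a d unfolding nx_def by auto
    qed
    have pp: "(last h, Min (\<omega> ` set h)) \<in> preprofile V Vd E \<omega> U \<pi> v"
      unfolding preprofile_def using a hp ndom by blast
    then have Q: "Qs (last h) \<noteq> {}" "Min (\<omega> ` set h) \<in> Qs (last h)" unfolding Qs_def by auto
    then have "rew_le (Min (\<omega> ` set h)) (Qm (last h))" using Qm by blast
    then have ev: "even (min (Min (\<omega> ` set h)) (thr (Qm (last h))))" using thr_iff by blast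
    have cHk_g: "cHk h k = cH (g k)" if "k \<le> n0" for k
      unfolding cHk_def h_def using gp that by simp
    have "even (min (Min (\<omega> ` set h)) (thr (Qm (last h)))) = False"
    proof (rule seg_lemma[OF win hne hp(2) hV])
      show "last h \<in> U" using a by simp
      show "Qs (last h) \<noteq> {}" by fact
    next
      fix k assume "Suc k < length h"
      then have k: "k < n0" using hp by simp
      then have kl: "k \<le> n0" by simp
      have gk: "conforming V Vd E \<pi> (g k)" "hd (g k) = v" using gp[OF kl] by auto
      have "nx \<tau> (g k) \<in> HR (cH (g k)) \<and> (Hown (cH (g k)) = False \<longrightarrow> nx \<tau> (g k) = \<tau> (cH (g k)))"
        using nx_valid[OF tau gk] .
      then show "cHk h (Suc k) \<in> HR (cHk h k) \<and> (Hown (cHk h k) = False \<longrightarrow> \<tau> (cHk h k) = cHk h (Suc k))"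
        using cHk_g[of k] cHk_g[of "Suc k"] k nxc[OF k] by auto
    next
      show "HX (last h) \<in> HR (cH h) \<and> (Hown (cH h) = False \<longrightarrow> \<tau> (cH h) = HX (last h))"
        using nv a by auto
    next
      have "HX (last h) \<in> HV" using a unfolding HV_def by auto
      then have "\<tau> (HX (last h)) \<in> HR (HX (last h))" using tau unfolding H.strat_def
        by (metis Hown.simps(3) IntD1)
      then show "False = False \<longrightarrow> \<tau> (HX (last h)) = st" using Q(1) by simp
    qed
    then show False using ev by simp
  qed
qed


definition sD :: "('v hn \<Rightarrow> 'v hn) \<Rightarrow> 'v \<Rightarrow> 'v option" where
  "sD \<sigma> w = (case \<sigma> (HN w) of HN w' \<Rightarrow> Some w' | _ \<Rightarrow> None)"

definition sP :: "('v hn \<Rightarrow> 'v hn) \<Rightarrow> 'v list \<Rightarrow> 'v option" where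
  "sP \<sigma> q = sD \<sigma> (last q)"

definition rho :: "('v hn \<Rightarrow> 'v hn) \<Rightarrow> 'v list \<Rightarrow> 'v option" where
  "rho \<sigma> p = (if conforming V Vd E (sP \<sigma>) p \<and> hd p = v \<and> last p \<in> Vd then sD \<sigma> (last p) else None)"

lemma rho_conf: "hd p = v \<Longrightarrow> conforming V Vd E (rho \<sigma>) p \<longleftrightarrow> conforming V Vd E (sP \<sigma>) p"
proof (induction p rule: rev_induct)
  case Nil
  then show ?case unfolding conforming_def by simp
next
  case (snoc x p)
  show ?case
  proof (cases "p = []")
    case True then show ?thesis by simp
  next
    case False
    have hp: "hd p = v" using snoc.prems False by simp
    have "conforming V Vd E (rho \<sigma>) (p @ [x]) \<longleftrightarrow>
        conforming V Vd E (rho \<sigma>) p \<and> x \<in> V \<and> (last p, x) \<in> E \<and> (last p \<in> Vd \<longrightarrow> rho \<sigma> p = Some x)"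
      using conforming_snoc[OF False] by blast
    also have "\<dots> \<longleftrightarrow> conforming V Vd E (sP \<sigma>) p \<and> x \<in> V \<and> (last p, x) \<in> E \<and> (last p \<in> Vd \<longrightarrow> sP \<sigma> p = Some x)"
      using snoc.IH[OF hp] hp unfolding rho_def sP_def by auto
    also have "\<dots> \<longleftrightarrow> conforming V Vd E (sP \<sigma>) (p @ [x])"
      using conforming_snoc[OF False] by blast
    finally show ?thesis .
  qed
qed

lemma sP_step:
  assumes c: "conforming V Vd E (sP \<sigma>) (p @ [w])" and ne: "p \<noteq> []" and hd: "hd p = v"
  shows "HN w \<in> HR (cH p) \<and> (Hown (cH p) \<longrightarrow> \<sigma> (cH p) = HN w)"
proof -
  have cc: "conforming V Vd E (sP \<sigma>) p" "w \<in> V" "(last p, w) \<in> E" "last p \<in> Vd \<longrightarrow> sP \<sigma> p = Some w"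
    using c conforming_snoc[OF ne] by blast+
  have "HN w \<in> HR (cH p)" using HN_succ_cH[OF ne hd cc(3)] .
  moreover have "Hown (cH p) \<longrightarrow> \<sigma> (cH p) = HN w"
  proof
    assume "Hown (cH p)"
    then have l: "last p \<in> Vd" using Hown_cH ne hd by blast
    then have "cH p = HN (last p)" using cH_Vd ne hd by blast
    moreover have "sD \<sigma> (last p) = Some w" using cc(4) l unfolding sP_def by simp
    ultimately show "\<sigma> (cH p) = HN w" unfolding sD_def by (auto split: hn.splits)
  qed
  ultimately show ?thesis by blast
qed

lemma L1:
  assumes win: "H.win_from HV True \<sigma> st"
  shows "conforming V Vd E (sP \<sigma>) p \<Longrightarrow> hd p = v \<Longrightarrow> H.win_from HV True \<sigma> (cH p)"
proof (induction p rule: rev_induct)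
  case Nil
  then show ?case unfolding conforming_def by simp
next
  case (snoc x p)
  show ?case
  proof (cases "p = []")
    case True
    then show ?thesis using win unfolding cH_def by simp
  next
    case False
    have hp: "hd p = v" using snoc.prems False by simp
    have cp: "conforming V Vd E (sP \<sigma>) p" using snoc.prems(1) conforming_snoc[OF False] by blast
    have IH: "H.win_from HV True \<sigma> (cH p)" using snoc.IH[OF cp hp] .
    have "cH p \<in> HV" using cH_HV False conf_set[OF cp] by blast
    then have "H.win_from HV True \<sigma> (HN x)"
      using H.win_from_step[OF IH] sP_step[OF snoc.prems(1) False hp] by auto
    then show ?thesis using cH_snoc[OF False] by simp
  qed
qed

lemma HLose_stuck:
  assumes "H.win_from HV True \<sigma> x" "x \<in> HV" "HLose \<in> HR x" "Hown x \<longrightarrow> \<sigma> x = HLose"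
  shows False
proof -
  have "HLose \<in> HV" unfolding HV_def by auto
  then have "even (Hpr HLose) = True"
    using H.win_from_sink[OF assms(1,2,3)] assms(4) by auto
  then show False by simp
qed

lemma diamond_wins:
  assumes sig: "H.strat HV True \<sigma>" and win: "H.win_from HV True \<sigma> st"
  shows "positional (rho \<sigma>) \<and> partial_winning V Vd E \<omega> U (rho \<sigma>) v \<and>
         profile_le (profile V Vd E \<omega> U (rho \<sigma>) v) (profile V Vd E \<omega> U \<pi> v)"
proof -
  have sigHN: "\<sigma> (HN w) \<in> HR (HN w)" if "w \<in> Vd" for w
  proof -
    have "HN w \<in> HV" using that VdV unfolding HV_def by auto
    moreover have "Hown (HN w)" using that by simp
    ultimately show ?thesis using sig unfolding H.strat_def by blast
  qed
  have pos: "positional (rho \<sigma>)"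
    unfolding positional_def
  proof (intro ballI impI)
    fix p q assume "p \<in> dom (rho \<sigma>)" "q \<in> dom (rho \<sigma>)" "last p = last q"
    then show "rho \<sigma> p = rho \<sigma> q" unfolding rho_def by (auto split: if_splits)
  qed
  have c1: "p \<noteq> [] \<and> hd p = v \<and> conforming V Vd E (rho \<sigma>) (p @ [the (rho \<sigma> p)]) \<and> last p \<in> Vd"
    if d: "p \<in> dom (rho \<sigma>)" for p
  proof -
    from d have c: "conforming V Vd E (sP \<sigma>) p" and h: "hd p = v" and l: "last p \<in> Vd"
      and sd: "sD \<sigma> (last p) \<noteq> None"
      unfolding rho_def by (auto split: if_splits)
    obtain w where w: "sD \<sigma> (last p) = Some w" using sd by auto
    have r: "rho \<sigma> p = Some w" using c h l w unfolding rho_def by simp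
    have ne: "p \<noteq> []" using conf_ne[OF c] .
    have "\<sigma> (HN (last p)) = HN w" using w unfolding sD_def by (auto split: hn.splits)
    then have "HN w \<in> HR (HN (last p))" using sigHN[OF l] by simp
    then have e: "(last p, w) \<in> E" by (auto simp: succs_def sinkof_def split: if_splits)
    then have "w \<in> V" using EV by auto
    then have "conforming V Vd E (sP \<sigma>) (p @ [w])"
      using conforming_snoc[OF ne] c e w unfolding sP_def by blast
    then have "conforming V Vd E (rho \<sigma>) (p @ [the (rho \<sigma> p)])" using rho_conf[of "p @ [w]" \<sigma>] h ne r by simp
    then show "p \<noteq> [] \<and> hd p = v \<and> conforming V Vd E (rho \<sigma>) (p @ [the (rho \<sigma> p)]) \<and> last p \<in> Vd"
      using ne h l by blast
  qed
  have c2: "p \<in> dom (rho \<sigma>)" if a: "conforming V Vd E (rho \<sigma>) p \<and> hd p = v \<and> last p \<in> Vd - U" for p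
  proof -
    from a have c: "conforming V Vd E (sP \<sigma>) p" and h: "hd p = v" and l: "last p \<in> Vd" "last p \<notin> U"
      using rho_conf by blast+
    have ne: "p \<noteq> []" using conf_ne[OF c] .
    have ch: "cH p = HN (last p)" using cH_Vd ne h l by blast
    have wp: "H.win_from HV True \<sigma> (HN (last p))" using L1[OF win c h] ch by simp
    have HV': "HN (last p) \<in> HV" using l VdV unfolding HV_def by auto
    show "p \<in> dom (rho \<sigma>)"
    proof (cases "sD \<sigma> (last p)")
      case None
      then have "\<sigma> (HN (last p)) \<in> HR (HN (last p))" "\<forall>w. \<sigma> (HN (last p)) \<noteq> HN w"
        using sigHN[OF l(1)] unfolding sD_def by (auto split: hn.splits)
      then have "\<sigma> (HN (last p)) = HLose" using l by (auto simp: sinkof_def split: if_splits)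
      then show ?thesis using HLose_stuck[OF wp HV'] sigHN[OF l(1)] l by simp
    next
      case (Some w)
      then show ?thesis using c h l unfolding rho_def by auto
    qed
  qed
  have pst: "partial_strategy V Vd E U (rho \<sigma>) v"
    unfolding partial_strategy_def using c1 c2 by blast
  have wfrom: "winning_from (ext_V V) (ext_Vd Vd) (ext_E E Vd U) (ext_\<omega> \<omega>) (ext_strat V Vd E U (rho \<sigma>)) (Some v)"
    unfolding winning_from_def
  proof (intro conjI allI impI)
    fix ps assume "ext_conf V Vd E U (rho \<sigma>) ps \<and> hd ps = Some v \<and> \<not> (\<exists>w. ext_conf V Vd E U (rho \<sigma>) (ps @ [w]))"
    then show "last ps \<notin> ext_Vd Vd" using fin_win[OF pst] by blast
  next
    fix f assume a: "inf_conforming (ext_V V) (ext_Vd Vd) (ext_E E Vd U) (ext_strat V Vd E U (rho \<sigma>)) f \<and> f 0 = Some v"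
    define F where "F k = the (f k)" for k
    have fS: "f k = Some (F k)" for k using inf_ext_Some a unfolding F_def by fastforce
    have F0: "F 0 = v" using a fS by (metis option.inject)
    have cF: "conforming V Vd E (sP \<sigma>) (map F [0..<Suc n])" for n
    proof -
      have "conforming V Vd E (rho \<sigma>) (map F [0..<Suc n])"
        using inf_ext_conf[of V Vd E U "rho \<sigma>" f "Suc n"] a unfolding F_def by auto
      moreover have "hd (map F [0..<Suc n]) = v" using F0 by (simp del: upt_Suc add: hd_map)
      ultimately show ?thesis using rho_conf by blast
    qed
    define fh where "fh n = cH (map F [0..<Suc n])" for n
    have hdF: "hd (map F [0..<Suc n]) = v" for n using F0 by (simp del: upt_Suc add: hd_map)
    have fh0: "fh 0 = st" unfolding fh_def cH_def by simp
    have step: "fh (Suc n) \<in> HR (fh n) \<and> (Hown (fh n) \<longrightarrow> \<sigma> (fh n) = fh (Suc n))" for n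
    proof -
      have e: "map F [0..<Suc (Suc n)] = map F [0..<Suc n] @ [F (Suc n)]" by simp
      have "fh (Suc n) = HN (F (Suc n))" unfolding fh_def e
        by (rule cH_snoc) (simp del: upt_Suc)
      then show ?thesis using sP_step[of \<sigma> "map F [0..<Suc n]" "F (Suc n)"] cF[of "Suc n"] e hdF
        unfolding fh_def by auto
    qed
    have play: "H.play HV fh"
      unfolding H.play_def using step cH_HV conf_ne cF conf_set unfolding fh_def by blast
    have conf: "H.conf True \<sigma> fh" unfolding H.conf_def using step by auto
    have "H.winsp True fh" using win play conf fh0 unfolding H.win_from_def by blast
    moreover have "Hpr (fh n) = \<omega> (F n)" for n
    proof -
      have "Hpr (cH (map F [0..<Suc n])) = \<omega> (last (map F [0..<Suc n]))"
        using Hpr_cH[of "map F [0..<Suc n]"] hdF by (simp del: upt_Suc)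
      moreover have "last (map F [0..<Suc n]) = F n" by simp
      ultimately show ?thesis unfolding fh_def by simp
    qed
    ultimately have "even (LEAST q. \<exists>\<^sub>\<infinity>n. \<omega> (F n) = q)" unfolding H.winsp_def by simp
    then show "inf_won (ext_\<omega> \<omega>) f" unfolding inf_won_def ext_\<omega>_def using fS by simp
  qed
  have prof: "profile_le (profile V Vd E \<omega> U (rho \<sigma>) v) (profile V Vd E \<omega> U \<pi> v)"
    unfolding profile_le_def
  proof (intro ballI, clarify)
    fix u q assume "(u, q) \<in> profile V Vd E \<omega> U (rho \<sigma>) v"
    then have "(u, q) \<in> preprofile V Vd E \<omega> U (rho \<sigma>) v" unfolding profile_def by auto
    then obtain p where p: "u = last p" "q = Min (\<omega> ` set p)" "length p > 1"
      "conforming V Vd E (rho \<sigma>) p" "hd p = v" "last p \<in> U" "p \<notin> dom (rho \<sigma>)"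
      unfolding preprofile_def by blast
    have c: "conforming V Vd E (sP \<sigma>) p" using rho_conf p by blast
    have ne: "p \<noteq> []" using conf_ne[OF c] .
    have pV: "set p \<subseteq> V" using conf_set[OF c] .
    have ch: "cH p = HN u" using p(1,3) unfolding cH_def by simp
    have wu: "H.win_from HV True \<sigma> (HN u)" using L1[OF win c p(5)] ch by simp
    have uV: "u \<in> V" using p(1) pV ne last_in_set by blast
    have HNu: "HN u \<in> HV" using uV unfolding HV_def by auto
    have XR: "HX u \<in> HR (HN u)" using p(1,6) by simp
    have XV: "HX u \<in> HV" using p(1,6) unfolding HV_def by auto
    have cx: "Hown (HN u) \<longrightarrow> \<sigma> (HN u) = HX u"
    proof
      assume o: "Hown (HN u)"
      then have uVd: "u \<in> Vd" by simp
      have "sD \<sigma> u = None" using p c uVd unfolding rho_def by (auto split: if_splits)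
      then have "\<sigma> (HN u) \<in> HR (HN u)" "\<forall>w. \<sigma> (HN u) \<noteq> HN w"
        using sigHN[OF uVd] unfolding sD_def by (auto split: hn.splits)
      then have "\<sigma> (HN u) = HX u \<or> \<sigma> (HN u) = HLose" using uVd by (auto simp: sinkof_def split: if_splits)
      moreover have "\<sigma> (HN u) \<noteq> HLose"
      proof
        assume "\<sigma> (HN u) = HLose"
        then show False using HLose_stuck[OF wu HNu] sigHN[OF uVd] by simp
      qed
      ultimately show "\<sigma> (HN u) = HX u" by blast
    qed
    have wx: "H.win_from HV True \<sigma> (HX u)" using H.win_from_step[OF wu HNu XR] cx by simp
    have Q: "Qs u \<noteq> {}"
    proof
      assume "Qs u = {}"
      then have "HLose \<in> HR (HX u)" by simp
      then show False using HLose_stuck[OF wx XV] by simp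
    qed
    have "even (min (Min (\<omega> ` set p)) (thr (Qm (last p)))) = True"
    proof (rule seg_lemma[OF win ne p(5) pV p(6)])
      show "Qs (last p) \<noteq> {}" using Q p(1) by simp
    next
      fix k assume k: "Suc k < length p"
      have e: "take (Suc (Suc k)) p = take (Suc k) p @ [p ! Suc k]" using k by (simp add: take_Suc_conv_app_nth)
      have ct: "conforming V Vd E (sP \<sigma>) (take (Suc (Suc k)) p)" using conforming_take[OF c] by simp
      have "take (Suc k) p \<noteq> []" "hd (take (Suc k) p) = v" using ne p(5) hd_take by auto
      then have "HN (p ! Suc k) \<in> HR (cH (take (Suc k) p)) \<and>
          (Hown (cH (take (Suc k) p)) \<longrightarrow> \<sigma> (cH (take (Suc k) p)) = HN (p ! Suc k))"
        using sP_step[of \<sigma> "take (Suc k) p" "p ! Suc k"] ct e by simp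
      moreover have "cHk p (Suc k) = HN (p ! Suc k)" unfolding cHk_def using e cH_snoc \<open>take (Suc k) p \<noteq> []\<close> by simp
      ultimately show "cHk p (Suc k) \<in> HR (cHk p k) \<and> (Hown (cHk p k) = True \<longrightarrow> \<sigma> (cHk p k) = cHk p (Suc k))"
        unfolding cHk_def by simp
    next
      show "HX (last p) \<in> HR (cH p) \<and> (Hown (cH p) = True \<longrightarrow> \<sigma> (cH p) = HX (last p))"
        using XR cx ch p(1) by simp
    next
      show "True = False \<longrightarrow> \<sigma> (HX (last p)) = st" by simp
    qed
    then have "rew_le q (Qm u)" using thr_iff p(1,2) by simp
    then show "\<exists>q'. (u, q') \<in> profile V Vd E \<omega> U \<pi> v \<and> rew_le q q'" using Qm_profile[OF Q] by blast
  qed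
  show ?thesis using pos pst wfrom prof unfolding partial_winning_def by blast
qed

end



lemma none_conf_len:
  assumes "conforming V Vd E (\<lambda>_. None) p" "hd p = v" "v \<in> Vd"
  shows "length p = 1"
proof (rule ccontr)
  assume "length p \<noteq> 1"
  moreover have "p \<noteq> []" using assms unfolding conforming_def by auto
  ultimately have "Suc 0 < length p" by (cases p) auto
  moreover have "p ! 0 = v" using assms(2) \<open>p \<noteq> []\<close> by (simp add: hd_conv_nth)
  ultimately show False using assms(1,3) unfolding conforming_def by auto
qed

lemma trivial_case:
  assumes VdV: "Vd \<subseteq> V" and vV: "v \<in> V" and vd: "v \<in> Vd" and vu: "v \<in> U"
  shows "\<exists>\<rho>. positional \<rho> \<and> partial_winning V Vd E \<omega> U \<rho> v \<and>
              profile_le (profile V Vd E \<omega> U \<rho> v) (profile V Vd E \<omega> U \<pi> v)"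
proof -
  let ?r = "\<lambda>_::'a list. None :: 'a option"
  have pos: "positional ?r" unfolding positional_def by auto
  have c2: "p \<in> dom ?r" if a: "conforming V Vd E ?r p \<and> hd p = v \<and> last p \<in> Vd - U" for p
  proof -
    have "length p = 1" using none_conf_len[of V Vd E p v] vd a by simp
    then have "last p = v" using a by (cases p) auto
    then show "p \<in> dom ?r" using a vu by auto
  qed
  have pst: "partial_strategy V Vd E U ?r v"
    unfolding partial_strategy_def using c2 by blast
  have wf: "winning_from (ext_V V) (ext_Vd Vd) (ext_E E Vd U) (ext_\<omega> \<omega>) (ext_strat V Vd E U ?r) (Some v)"
    unfolding winning_from_def
  proof (intro conjI allI impI)
    fix ps assume "ext_conf V Vd E U ?r ps \<and> hd ps = Some v \<and> \<not> (\<exists>w. ext_conf V Vd E U ?r (ps @ [w]))"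
    then show "last ps \<notin> ext_Vd Vd" using fin_win[OF pst] by blast
  next
    fix f assume a: "inf_conforming (ext_V V) (ext_Vd Vd) (ext_E E Vd U) (ext_strat V Vd E U ?r) f \<and> f 0 = Some v"
    then have "conforming V Vd E ?r (map (\<lambda>k. the (f k)) [0..<2])" using inf_ext_conf[of V Vd E U ?r f 2] by auto
    moreover have "hd (map (\<lambda>k. the (f k)) [0..<2]) = v" using a by (simp add: upt_rec)
    ultimately have "length (map (\<lambda>k. the (f k)) [0..<2]) = 1"
      using none_conf_len[of V Vd E "map (\<lambda>k. the (f k)) [0..<2]" v] vd by simp
    then show "inf_won (ext_\<omega> \<omega>) f" by simp
  qed
  have pw: "partial_winning V Vd E \<omega> U ?r v" unfolding partial_winning_def using pst wf by blast
  have "preprofile V Vd E \<omega> U ?r v = {}"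
    unfolding preprofile_def using none_conf_len vd by fastforce
  then have "profile_le (profile V Vd E \<omega> U ?r v) (profile V Vd E \<omega> U \<pi> v)"
    unfolding profile_le_def profile_def by auto
  then show ?thesis using pos pw by blast
qed

theorem lemma3p22:
  fixes V Vd U :: "'v set" and E :: "('v \<times> 'v) set" and \<omega> :: "'v \<Rightarrow> nat"
    and v :: 'v and \<pi> :: "'v list \<Rightarrow> 'v option"
  assumes "finite V" and "Vd \<subseteq> V" and "E \<subseteq> V \<times> V" and "U \<subseteq> V" and "v \<in> V"
    and "partial_winning V Vd E \<omega> U \<pi> v"
  shows "\<exists>\<rho>. positional \<rho> \<and> partial_winning V Vd E \<omega> U \<rho> v \<and>
              profile_le (profile V Vd E \<omega> U \<rho> v) (profile V Vd E \<omega> U \<pi> v)"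
proof (cases "v \<in> Vd \<and> v \<in> U")
  case True
  then show ?thesis using trivial_case[OF assms(2) assms(5)] by simp
next
  case False
  interpret S: setting V Vd U E \<omega> v \<pi>
    by (rule setting.intro) (use assms False in simp_all)
  obtain \<sigma> where \<sigma>: "\<forall>i. S.H.strat S.HV i (\<sigma> i)" "\<forall>x\<in>S.HV. \<exists>i. S.H.win_from S.HV i (\<sigma> i) x"
    using S.H.zielonka[OF S.finHV S.nd] by metis
  obtain i where w: "S.H.win_from S.HV i (\<sigma> i) S.st" using \<sigma>(2) S.st_HV by blast
  show ?thesis
  proof (cases i)
    case True
    then have "S.H.win_from S.HV True (\<sigma> True) S.st" using w by simp
    moreover have "S.H.strat S.HV True (\<sigma> True)" using \<sigma>(1) by blast
    ultimately show ?thesis using S.diamond_wins[of "\<sigma> True"] by blast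
  next
    case False
    then have "S.H.win_from S.HV False (\<sigma> False) S.st" using w by simp
    moreover have "S.H.strat S.HV False (\<sigma> False)" using \<sigma>(1) by blast
    ultimately show ?thesis using S.box_not_win[of "\<sigma> False"] by blast
  qed
qed


end
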